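(* For every $\delta\in\mathcal{D}^{LSL}$ the inequality $\tau(S_\delta)\le\rho(S_\delta)$ holds. Moreover, this inequality is sharp: for every $x\in[0,1]$ there exists some $\delta\in\mathcal{D}^{LSL}$ with $\tau(S_\delta)=\rho(S_\delta)=x$.
   Context: $\lambda_2$ is Lebesgue measure on $[0,1]^2$. Let $\mathcal{D}$ be the set of all functions $\delta:[0,1]\to[0,1]$ with $\delta(u)\le u$, $\delta(1)=1$, $\delta$ non-decreasing and 2-Lipschitz. Let $\mathcal{D}^{LSL}$ be the set of $\delta\in\mathcal{D}$ such that $x\mapsto\delta(x)/x$ is non-decreasing and $x\mapsto\delta(x)/x^2$ is non-increasing on $(0,1]$. For $\delta\in\mathcal{D}^{LSL}$, $S_\delta(x,y)=y\,\delta(x)/x$ if $y\le x$ and $x\,\delta(y)/y$ otherwise (convention $0/0:=0$); it is a copula. For a copula $C$ with doubly stochastic measure $\mu_C$ ($\mu_C([0,x]\times[0,y])=C(x,y)$), Kendall's tau is $\tau(C)=4\int_{[0,1]^2}C\,d\mu_C-1$ and Spearman's rho is $\rho(C)=12\int_{[0,1]^2}C\,d\lambda_2-3$. *)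

theory Defs
  imports "HOL-Analysis.Analysis"
begin

definition diagonals :: "(real \<Rightarrow> real) set" where
  "diagonals = {\<delta>.
     (\<forall>u\<in>{0..1}. \<delta> u \<in> {0..1}) \<and>
     (\<forall>u\<in>{0..1}. \<delta> u \<le> u) \<and>
     \<delta> 1 = 1 \<and>
     mono_on {0..1} \<delta> \<and>
     (\<forall>u\<in>{0..1}. \<forall>v\<in>{0..1}. \<bar>\<delta> u - \<delta> v\<bar> \<le> 2 * \<bar>u - v\<bar>)}"

definition diagonals_LSL :: "(real \<Rightarrow> real) set" where
  "diagonals_LSL = {\<delta> \<in> diagonals.
     mono_on {0<..1} (\<lambda>x. \<delta> x / x) \<and>
     antimono_on {0<..1} (\<lambda>x. \<delta> x / x ^ 2)}"

text \<open>The copula S_delta (division by zero yields 0 in Isabelle, matching 0/0 := 0).\<close>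
definition S_diag :: "(real \<Rightarrow> real) \<Rightarrow> real \<Rightarrow> real \<Rightarrow> real" where
  "S_diag \<delta> x y = (if y \<le> x then y * \<delta> x / x else x * \<delta> y / y)"

definition copula_measure :: "(real \<Rightarrow> real \<Rightarrow> real) \<Rightarrow> (real \<times> real) measure" where
  "copula_measure C = (THE \<mu>. sets \<mu> = sets (borel :: (real \<times> real) measure) \<and>
      emeasure \<mu> (- ({0..1} \<times> {0..1})) = 0 \<and>
      (\<forall>x\<in>{0..1}. \<forall>y\<in>{0..1}. emeasure \<mu> ({0..x} \<times> {0..y}) = ennreal (C x y)))"

definition kendall_tau :: "(real \<Rightarrow> real \<Rightarrow> real) \<Rightarrow> real" where
  "kendall_tau C = 4 * (\<integral>p. C (fst p) (snd p) \<partial>(copula_measure C)) - 1"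

definition spearman_rho :: "(real \<Rightarrow> real \<Rightarrow> real) \<Rightarrow> real" where
  "spearman_rho C = 12 * (LINT p : {0..1} \<times> {0..1} | (lborel :: (real \<times> real) measure). C (fst p) (snd p)) - 3"

end

theory Submission
  imports Defs
begin

definition ginv :: "(real \<Rightarrow> real) \<Rightarrow> real \<Rightarrow> real" where
  "ginv f v = Inf {t \<in> {0<..1}. min v 1 \<le> f t}"

lemma ginv_basic:
  assumes f1: "f 1 = 1"
  shows "1 \<in> {t \<in> {0<..1}. min v 1 \<le> f t}" "bdd_below {t \<in> {0<..1::real}. min v 1 \<le> f t}"
    "0 \<le> ginv f v" "ginv f v \<le> 1"
proof -
  show 1: "1 \<in> {t \<in> {0<..1}. min v 1 \<le> f t}" using f1 by auto
  show 2: "bdd_below {t \<in> {0<..1::real}. min v 1 \<le> f t}" by (rule bdd_belowI[of _ 0]) auto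
  show "0 \<le> ginv f v" unfolding ginv_def using 1 by (intro cInf_greatest) auto
  show "ginv f v \<le> 1" unfolding ginv_def using 1 2 by (intro cInf_lower) auto
qed

lemma ginv_mono:
  assumes f1: "f 1 = 1"
  shows "mono (ginv f)"
proof
  fix v w :: real assume "v \<le> w"
  show "ginv f v \<le> ginv f w" unfolding ginv_def
    apply (rule cInf_superset_mono)
    using ginv_basic[of f w, OF f1] ginv_basic[of f v, OF f1] \<open>v \<le> w\<close> by auto
qed

lemma ginv_le_iff:
  assumes mono: "mono_on {0<..1} f" and cont: "continuous_on {0<..1} f" and f1: "f 1 = 1"
    and v: "v \<le> 1" and t: "t \<in> {0<..1}"
  shows "ginv f v \<le> t \<longleftrightarrow> v \<le> f t"
proof
  assume "v \<le> f t"
  then show "ginv f v \<le> t" unfolding ginv_def using ginv_basic[of f v, OF f1] t v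
    by (intro cInf_lower) auto
next
  assume le: "ginv f v \<le> t"
  show "v \<le> f t"
  proof (rule ccontr)
    assume "\<not> v \<le> f t"
    hence lt: "f t < v" by simp
    obtain e where e: "e > 0" and he: "\<And>x. x \<in> {0<..1} \<Longrightarrow> dist x t < e \<Longrightarrow> dist (f x) (f t) < v - f t"
      using cont t lt unfolding continuous_on_iff by (metis diff_gt_0_iff_gt)
    have "t + e \<le> ginv f v" unfolding ginv_def
    proof (rule cInf_greatest)
      show "{t \<in> {0<..1}. min v 1 \<le> f t} \<noteq> {}" using ginv_basic[of f v, OF f1] by blast
    next
      fix x assume x: "x \<in> {t \<in> {0<..1}. min v 1 \<le> f t}"
      hence fx: "v \<le> f x" using v by auto
      show "t + e \<le> x"
      proof (rule ccontr)
        assume "\<not> t + e \<le> x"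
        show False
        proof (cases "x \<le> t")
          case True
          hence "f x \<le> f t" using mono x t by (auto intro: mono_onD)
          thus False using fx lt by simp
        next
          case False
          hence "dist x t < e" using \<open>\<not> t + e \<le> x\<close> by (simp add: dist_real_def)
          hence "dist (f x) (f t) < v - f t" using he x by auto
          thus False using fx by (simp add: dist_real_def)
        qed
      qed
    qed
    thus False using le e by simp
  qed
qed

lemma ginv_gt:
  assumes mono: "mono_on {0<..1} f" and cont: "continuous_on {0<..1} f" and f1: "f 1 = 1"
    and v: "v \<le> 1" and s: "s \<in> {0<..1}" and fs: "f s < v"
  shows "s < ginv f v"
  using ginv_le_iff[OF mono cont f1 v s] fs by linarith

lemma ginv_eq:
  assumes mono: "mono_on {0<..1} f" and cont: "continuous_on {0<..1} f" and f1: "f 1 = 1"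
    and v: "v \<le> 1" and pos: "0 < ginv f v"
  shows "f (ginv f v) = v"
proof -
  let ?i = "ginv f v"
  have i: "?i \<in> {0<..1}" using pos ginv_basic[of f v, OF f1] by auto
  have ge: "v \<le> f ?i" using ginv_le_iff[OF mono cont f1 v i] by simp
  have "f ?i \<le> v"
  proof (rule ccontr)
    assume "\<not> f ?i \<le> v"
    hence lt: "v < f ?i" by simp
    obtain e where e: "e > 0" and he: "\<And>x. x \<in> {0<..1} \<Longrightarrow> dist x ?i < e \<Longrightarrow> dist (f x) (f ?i) < f ?i - v"
      using cont i lt unfolding continuous_on_iff by (metis diff_gt_0_iff_gt)
    define x where "x = max (?i/2) (?i - e/2)"
    have x: "x \<in> {0<..1}" "x < ?i" "dist x ?i < e" using i e pos unfolding x_def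
      by (auto simp: dist_real_def)
    have "dist (f x) (f ?i) < f ?i - v" using he x by auto
    hence "v \<le> f x" by (simp add: dist_real_def)
    hence "?i \<le> x" using ginv_le_iff[OF mono cont f1 v x(1)] by simp
    thus False using x by simp
  qed
  with ge show ?thesis by simp
qed


lemma atMost_pair: "{..(x::real, y::real)} = {..x} \<times> {..y}"
  by (auto simp: less_eq_prod_def)

lemma emeasure_restrict_null:
  assumes "sets \<mu> = sets borel" "emeasure \<mu> (- K) = 0" "K \<in> sets borel" "A \<in> sets borel"
  shows "emeasure \<mu> A = emeasure \<mu> (A \<inter> K)"
proof -
  have "emeasure \<mu> A = emeasure \<mu> (A \<inter> K) + emeasure \<mu> (A - K)"
    using assms by (subst plus_emeasure) (auto intro!: arg_cong[where f="emeasure \<mu>"])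
  moreover have "emeasure \<mu> (A - K) \<le> emeasure \<mu> (- K)"
    using assms by (intro emeasure_mono) auto
  ultimately show ?thesis using assms by simp
qed

lemma copula_measure_eq:
  fixes \<mu> :: "(real \<times> real) measure"
  assumes P: "sets \<mu> = sets borel \<and> emeasure \<mu> (- ({0..1} \<times> {0..1})) = 0 \<and>
      (\<forall>x\<in>{0..1}. \<forall>y\<in>{0..1}. emeasure \<mu> ({0..x} \<times> {0..y}) = ennreal (C x y))"
  shows "copula_measure C = \<mu>"
  unfolding copula_measure_def
proof (rule the_equality)
  show "sets \<mu> = sets borel \<and> emeasure \<mu> (- ({0..1} \<times> {0..1})) = 0 \<and>
      (\<forall>x\<in>{0..1}. \<forall>y\<in>{0..1}. emeasure \<mu> ({0..x} \<times> {0..y}) = ennreal (C x y))" by fact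
next
  fix \<nu> :: "(real \<times> real) measure"
  assume Q: "sets \<nu> = sets borel \<and> emeasure \<nu> (- ({0..1} \<times> {0..1})) = 0 \<and>
      (\<forall>x\<in>{0..1}. \<forall>y\<in>{0..1}. emeasure \<nu> ({0..x} \<times> {0..y}) = ennreal (C x y))"
  let ?K = "{0..1::real} \<times> {0..1::real}"
  let ?E = "range (\<lambda>a::real\<times>real. {..a})"
  have Kb: "?K \<in> sets borel" by (intro borel_closed closed_Times) auto
  have key: "emeasure \<mu> {..a} = emeasure \<nu> {..a}" for a :: "real \<times> real"
  proof -
    obtain x y where a: "a = (x, y)" by (cases a)
    have "emeasure \<mu> {..a} = emeasure \<mu> ({..a} \<inter> ?K)"
      using P Kb by (intro emeasure_restrict_null) auto
    moreover have "emeasure \<nu> {..a} = emeasure \<nu> ({..a} \<inter> ?K)"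
      using Q Kb by (intro emeasure_restrict_null) auto
    moreover have "emeasure \<mu> ({..a} \<inter> ?K) = emeasure \<nu> ({..a} \<inter> ?K)"
    proof (cases "x < 0 \<or> y < 0")
      case True
      hence "{..a} \<inter> ?K = {}" unfolding a atMost_pair by auto
      thus ?thesis by simp
    next
      case False
      hence e: "{..a} \<inter> ?K = {0..min x 1} \<times> {0..min y 1}" unfolding a atMost_pair by auto
      show ?thesis unfolding e using P Q False by auto
    qed
    ultimately show ?thesis by simp
  qed
  have sig: "sets (borel :: (real\<times>real) measure) = sigma_sets UNIV ?E"
    by (subst borel_eq_atMost) (simp add: sets_measure_of)
  show "\<nu> = \<mu>"
  proof (rule measure_eqI_generator_eq[where E="?E" and \<Omega>=UNIV and A="\<lambda>i. {..(real i, real i)}"])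
    show "Int_stable ?E"
    proof (clarsimp simp: Int_stable_def)
      fix a b :: "real \<times> real"
      have "{..a} \<inter> {..b} = {..(min (fst a) (fst b), min (snd a) (snd b))}"
        by (auto simp: less_eq_prod_def)
      thus "{..a} \<inter> {..b} \<in> range atMost" by blast
    qed
  next
    show "?E \<subseteq> Pow UNIV" by auto
  next
    fix X assume "X \<in> ?E" thus "emeasure \<nu> X = emeasure \<mu> X" using key by auto
  next
    show "sets \<nu> = sigma_sets UNIV ?E" using Q sig by simp
    show "sets \<mu> = sigma_sets UNIV ?E" using P sig by simp
  next
    show "range (\<lambda>i. {..(real i, real i)}) \<subseteq> ?E" by auto
  next
    show "(\<Union>i. {..(real i, real i)}) = UNIV"
    proof (rule set_eqI, simp)
      fix p :: "real \<times> real"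
      obtain n where "max (fst p) (snd p) \<le> real n" using real_arch_simple by blast
      thus "\<exists>i. p \<le> (real i, real i)" by (auto simp: less_eq_prod_def)
    qed
  next
    fix i
    have "emeasure \<nu> {..(real i, real i)} \<le> emeasure \<nu> UNIV" using Q by (intro emeasure_mono) auto
    also have "\<dots> = emeasure \<nu> (UNIV \<inter> ?K)" using Q Kb by (intro emeasure_restrict_null) auto
    also have "\<dots> = ennreal (C 1 1)" using Q by auto
    finally show "emeasure \<nu> {..(real i, real i)} \<noteq> \<infinity>" by (auto simp: top_unique)
  qed
qed


locale lsl =
  fixes \<delta> :: "real \<Rightarrow> real"
  assumes mem: "\<delta> \<in> diagonals_LSL"
begin

lemma dfacts:
  "\<And>u. u \<in> {0..1} \<Longrightarrow> 0 \<le> \<delta> u" "\<And>u. u \<in> {0..1} \<Longrightarrow> \<delta> u \<le> u" "\<delta> 1 = 1"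
  "mono_on {0..1} \<delta>"
  "\<And>u v. u \<in> {0..1} \<Longrightarrow> v \<in> {0..1} \<Longrightarrow> \<bar>\<delta> u - \<delta> v\<bar> \<le> 2 * \<bar>u - v\<bar>"
  "mono_on {0<..1} (\<lambda>x. \<delta> x / x)" "antimono_on {0<..1} (\<lambda>x. \<delta> x / x ^ 2)"
  using mem unfolding diagonals_LSL_def diagonals_def by auto

definition d :: "real \<Rightarrow> real" where "d x = \<delta> (max 0 (min 1 x))"
definition g :: "real \<Rightarrow> real" where "g x = d x / x"
definition psi :: "real \<Rightarrow> real" where "psi x = x^2 / d x"

lemma d_eq: "x \<in> {0..1} \<Longrightarrow> d x = \<delta> x"
  unfolding d_def by (auto simp: max_def min_def)

lemma cont_delta: "continuous_on {0..1} \<delta>"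
  unfolding continuous_on_iff
proof (intro ballI allI impI)
  fix x e :: real assume x: "x \<in> {0..1}" and e: "0 < e"
  show "\<exists>d>0. \<forall>x'\<in>{0..1}. dist x' x < d \<longrightarrow> dist (\<delta> x') (\<delta> x) < e"
  proof (intro exI[of _ "e/2"] conjI ballI impI)
    fix x' assume "x' \<in> {0..1}" "dist x' x < e/2"
    thus "dist (\<delta> x') (\<delta> x) < e" using dfacts(5)[of x' x] x by (simp add: dist_real_def)
  qed (use e in auto)
qed

lemma cont_d: "continuous_on UNIV d"
  unfolding d_def
  by (rule continuous_on_compose2[OF cont_delta]) (auto intro!: continuous_intros)

lemma d0: "d 0 = 0" using dfacts(1)[of 0] dfacts(2)[of 0] d_eq[of 0] by auto
lemma d1: "d 1 = 1" using dfacts(3) d_eq[of 1] by auto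
lemma d_le: "x \<in> {0..1} \<Longrightarrow> d x \<le> x" using dfacts(2) d_eq by auto
lemma d_nn: "x \<in> {0..1} \<Longrightarrow> 0 \<le> d x" using dfacts(1) d_eq by auto
lemma d_ge: assumes "x \<in> {0<..1}" shows "x^2 \<le> d x"
proof -
  have "\<delta> 1 / 1^2 \<le> \<delta> x / x^2" using monotone_onD[OF dfacts(7), of x 1] assms by auto
  hence "1 \<le> \<delta> x / x^2" using dfacts(3) by simp
  thus ?thesis using assms d_eq[of x] by (auto simp: field_simps)
qed
lemma d_pos: "x \<in> {0<..1} \<Longrightarrow> 0 < d x"
  using d_ge[of x] by (smt (verit, ccfv_SIG) greaterThanAtMost_iff zero_less_power)

lemma g_mono: "mono_on {0<..1} g"
  using dfacts(6) unfolding g_def monotone_on_def by (auto simp: d_eq)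
lemma g_cont: "continuous_on {0<..1} g"
  unfolding g_def by (intro continuous_intros continuous_on_subset[OF cont_d]) auto
lemma g1: "g 1 = 1" using d1 by (simp add: g_def)
lemma g0: "g 0 = 0" by (simp add: g_def)
lemma g_nn: "x \<in> {0..1} \<Longrightarrow> 0 \<le> g x" using d_nn[of x] by (auto simp: g_def)
lemma g_le1: "x \<in> {0..1} \<Longrightarrow> g x \<le> 1" using d_le[of x] d_nn[of x] by (auto simp: g_def divide_le_eq)

definition phi :: "real \<Rightarrow> real" where "phi x = d x / x^2"
lemma phi_anti: "antimono_on {0<..1} phi"
  using dfacts(7) unfolding phi_def monotone_on_def by (auto simp: d_eq)
lemma phi_ge1: "x \<in> {0<..1} \<Longrightarrow> 1 \<le> phi x"
  using d_ge[of x] by (auto simp: phi_def field_simps)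
lemma psi_phi: "x \<in> {0<..1} \<Longrightarrow> psi x = 1 / phi x"
  by (simp add: psi_def phi_def)
lemma psi_mono: "mono_on {0<..1} psi"
proof (rule monotone_onI)
  fix x y :: real assume "x \<in> {0<..1}" "y \<in> {0<..1}" "x \<le> y"
  moreover have "phi y \<le> phi x" using monotone_onD[OF phi_anti, of x y] calculation by auto
  ultimately show "psi x \<le> psi y" using phi_ge1[of y]
    by (simp add: psi_phi frac_le)
qed
lemma psi_cont: "continuous_on {0<..1} psi"
  unfolding psi_def by (intro continuous_intros continuous_on_subset[OF cont_d]) (use d_pos in fastforce)+
lemma psi1: "psi 1 = 1" using d1 by (simp add: psi_def)
lemma psi_pos: "x \<in> {0<..1} \<Longrightarrow> 0 < psi x" using d_pos[of x] by (simp add: psi_def)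
lemma psi_le1: "x \<in> {0<..1} \<Longrightarrow> psi x \<le> 1" using d_ge[of x] d_pos[of x] by (simp add: psi_def)

definition q where "q = ginv g"
definition r where "r = ginv psi"

lemma g_meas[measurable]: "g \<in> borel_measurable borel"
  unfolding g_def using cont_d by (intro borel_measurable_divide borel_measurable_continuous_onI) auto
lemma d_meas[measurable]: "d \<in> borel_measurable borel"
  using cont_d by (intro borel_measurable_continuous_onI) auto
lemma psi_meas[measurable]: "psi \<in> borel_measurable borel"
  unfolding psi_def by measurable
lemma q_meas[measurable]: "q \<in> borel_measurable borel"
  unfolding q_def using ginv_mono[of g, OF g1] by (rule borel_measurable_mono)
lemma r_meas[measurable]: "r \<in> borel_measurable borel"
  unfolding r_def using ginv_mono[of psi, OF psi1] by (rule borel_measurable_mono)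

lemmas q_le_iff = ginv_le_iff[OF g_mono g_cont g1, folded q_def]
lemmas q_gt = ginv_gt[OF g_mono g_cont g1, folded q_def]
lemmas q_eq = ginv_eq[OF g_mono g_cont g1, folded q_def]
lemmas q_basic = ginv_basic[of g, OF g1, folded q_def]
lemmas r_le_iff = ginv_le_iff[OF psi_mono psi_cont psi1, folded r_def]
lemmas r_gt = ginv_gt[OF psi_mono psi_cont psi1, folded r_def]
lemmas r_eq = ginv_eq[OF psi_mono psi_cont psi1, folded r_def]
lemmas r_basic = ginv_basic[of psi, OF psi1, folded r_def]

end

context lsl begin

definition RL :: "(real \<times> real) set" where "RL = {p. 0 < fst p \<and> fst p \<le> 1 \<and> g (fst p) < snd p \<and> snd p \<le> 1}"
definition RD :: "(real \<times> real) set" where "RD = {p. 0 < fst p \<and> fst p \<le> 1 \<and> psi (fst p) < snd p \<and> snd p \<le> 1}"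

lemma meas_prod_borel: "f \<in> measurable (borel \<Otimes>\<^sub>M borel) N \<Longrightarrow> f \<in> measurable (borel :: (real \<times> real) measure) N"
  by (simp add: borel_prod)
lemma sets_prod_borel: "A \<in> sets (borel \<Otimes>\<^sub>M borel) \<Longrightarrow> A \<in> sets (borel :: (real \<times> real) measure)"
  by (subst (asm) borel_prod)
lemma RL_meas2[measurable]: "RL \<in> sets (borel \<Otimes>\<^sub>M borel)"
proof -
  have "RL = {p \<in> space (borel \<Otimes>\<^sub>M borel). 0 < fst p \<and> fst p \<le> 1 \<and> g (fst p) < snd p \<and> snd p \<le> 1}"
    by (auto simp: RL_def space_pair_measure)
  also have "\<dots> \<in> sets (borel \<Otimes>\<^sub>M borel)" by measurable
  finally show ?thesis .
qed
lemma RD_meas2[measurable]: "RD \<in> sets (borel \<Otimes>\<^sub>M borel)"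
proof -
  have "RD = {p \<in> space (borel \<Otimes>\<^sub>M borel). 0 < fst p \<and> fst p \<le> 1 \<and> psi (fst p) < snd p \<and> snd p \<le> 1}"
    by (auto simp: RD_def space_pair_measure)
  also have "\<dots> \<in> sets (borel \<Otimes>\<^sub>M borel)" by measurable
  finally show ?thesis .
qed
lemma RL_meas[measurable]: "RL \<in> sets borel" by (rule sets_prod_borel) measurable
lemma RD_meas[measurable]: "RD \<in> sets borel" by (rule sets_prod_borel) measurable

definition w :: "nat \<times> (real \<times> real) \<Rightarrow> ennreal" where
  "w p = (if fst p = 2 then indicator RD (snd p) * ennreal (2 * fst (snd p) / (snd (snd p))^2) else indicator RL (snd p))"
definition T :: "nat \<times> (real \<times> real) \<Rightarrow> real \<times> real" where
  "T p = (if fst p = 0 then (q (snd (snd p)), fst (snd p)) else if fst p = 1 then (fst (snd p), q (snd (snd p)))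
          else (r (snd (snd p)), r (snd (snd p))))"
definition M0 :: "(nat \<times> (real \<times> real)) measure" where "M0 = count_space {0,1,2} \<Otimes>\<^sub>M lborel"
definition mu :: "(real \<times> real) measure" where "mu = distr (density M0 w) borel T"

lemma w_meas[measurable]: "w \<in> borel_measurable M0"
  unfolding M0_def
proof (rule measurable_pair_measure_countable1)
  fix i :: nat
  have e: "(\<lambda>y. w (i, y)) = (\<lambda>y. if i = 2 then indicator RD y * ennreal (2 * fst y / (snd y)^2) else indicator RL y)"
    by (rule ext) (simp add: w_def)
  show "(\<lambda>y. w (i, y)) \<in> borel_measurable lborel"
    unfolding e measurable_lborel2 by (rule meas_prod_borel) measurable
qed simp

lemma T_meas[measurable]: "T \<in> measurable M0 borel"
  unfolding M0_def
proof (rule measurable_pair_measure_countable1)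
  fix i :: nat
  have e: "(\<lambda>y. T (i, y)) = (\<lambda>y. if i = 0 then (q (snd y), fst y) else if i = 1 then (fst y, q (snd y)) else (r (snd y), r (snd y)))"
    by (rule ext) (simp add: T_def)
  show "(\<lambda>y. T (i, y)) \<in> measurable lborel borel"
    unfolding e measurable_lborel2 by (rule meas_prod_borel) measurable
qed simp

lemma nn_M0:
  assumes [measurable]: "f \<in> borel_measurable M0"
  shows "(\<integral>\<^sup>+ p. f p \<partial>M0) = (\<integral>\<^sup>+ y. f (0, y) \<partial>lborel) + (\<integral>\<^sup>+ y. f (1, y) \<partial>lborel) + (\<integral>\<^sup>+ y. f (2, y) \<partial>lborel)"
proof -
  have "(\<integral>\<^sup>+ p. f p \<partial>M0) = (\<integral>\<^sup>+ i. \<integral>\<^sup>+ y. f (i, y) \<partial>lborel \<partial>count_space {0,1,2})"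
    unfolding M0_def by (rule lborel.nn_integral_fst[symmetric]) (use assms in \<open>simp add: M0_def\<close>)
  also have "\<dots> = (\<Sum>i\<in>{0,1,2::nat}. \<integral>\<^sup>+ y. f (i, y) \<partial>lborel)"
    by (rule nn_integral_count_space_finite) simp
  also have "\<dots> = (\<integral>\<^sup>+ y. f (0, y) \<partial>lborel) + (\<integral>\<^sup>+ y. f (1, y) \<partial>lborel) + (\<integral>\<^sup>+ y. f (2, y) \<partial>lborel)"
    by (simp add: add.assoc)
  finally show ?thesis .
qed

lemma sets_mu: "sets mu = sets borel" unfolding mu_def by simp

lemma emeasure_mu:
  assumes [measurable]: "A \<in> sets borel"
  shows "emeasure mu A = (\<integral>\<^sup>+ p. w p * indicator A (T p) \<partial>M0)"
proof -
  have "emeasure mu A = emeasure (density M0 w) (T -` A \<inter> space (density M0 w))"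
    unfolding mu_def by (rule emeasure_distr) auto
  also have "\<dots> = (\<integral>\<^sup>+ p. w p * indicator (T -` A \<inter> space M0) p \<partial>M0)"
    by (subst emeasure_density) auto
  also have "\<dots> = (\<integral>\<^sup>+ p. w p * indicator A (T p) \<partial>M0)"
    by (rule nn_integral_cong) (auto simp: indicator_def)
  finally show ?thesis .
qed

lemma nn_integral_mu:
  assumes [measurable]: "f \<in> borel_measurable borel"
  shows "(\<integral>\<^sup>+ x. f x \<partial>mu) = (\<integral>\<^sup>+ p. w p * f (T p) \<partial>M0)"
proof -
  have "(\<integral>\<^sup>+ x. f x \<partial>mu) = (\<integral>\<^sup>+ p. f (T p) \<partial>density M0 w)"
    unfolding mu_def by (rule nn_integral_distr) auto
  also have "\<dots> = (\<integral>\<^sup>+ p. w p * f (T p) \<partial>M0)"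
    by (rule nn_integral_density) auto
  finally show ?thesis .
qed

lemma meas_ll: "f \<in> measurable (borel \<Otimes>\<^sub>M borel) N \<Longrightarrow> f \<in> measurable (lborel \<Otimes>\<^sub>M (lborel :: real measure)) N"
  by (subst measurable_cong_sets[OF sets_pair_measure_cong[OF sets_lborel sets_lborel] refl])

lemma nn_pair_fst:
  assumes "f \<in> borel_measurable (borel \<Otimes>\<^sub>M (borel :: real measure))"
  shows "(\<integral>\<^sup>+ y. f y \<partial>lborel) = (\<integral>\<^sup>+ s. \<integral>\<^sup>+ v. f (s, v) \<partial>lborel \<partial>lborel)"
  by (subst lborel_prod[symmetric], rule lborel.nn_integral_fst[symmetric]) (rule meas_ll[OF assms])

lemma nn_pair_snd:
  assumes "f \<in> borel_measurable (borel \<Otimes>\<^sub>M (borel :: real measure))"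
  shows "(\<integral>\<^sup>+ y. f y \<partial>lborel) = (\<integral>\<^sup>+ v. \<integral>\<^sup>+ s. f (s, v) \<partial>lborel \<partial>lborel)"
  by (subst lborel_prod[symmetric], rule lborel_pair.nn_integral_snd[symmetric]) (rule meas_ll[OF assms])

end

lemma ftc_real:
  fixes F f :: "real \<Rightarrow> real"
  assumes "a \<le> b" "\<And>x. x \<in> {a..b} \<Longrightarrow> (F has_real_derivative f x) (at x)"
  shows "(f has_integral (F b - F a)) {a..b}"
  using assms(1) by (intro fundamental_theorem_of_calculus)
    (auto simp: has_real_derivative_iff_has_vector_derivative[symmetric] intro!: has_field_derivative_at_within assms(2))

lemma nn_interval:
  fixes f :: "real \<Rightarrow> real"
  assumes "{a<..<b} \<subseteq> S" "S \<subseteq> {a..b}" "a \<le> b" "(f has_integral I) {a..b}"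
    "\<And>x. x \<in> {a..b} \<Longrightarrow> 0 \<le> f x"
  shows "(\<integral>\<^sup>+x. ennreal (f x) * indicator S x \<partial>lborel) = ennreal I"
proof -
  have "(\<integral>\<^sup>+x. ennreal (f x) * indicator S x \<partial>lborel) = (\<integral>\<^sup>+x. ennreal (f x) * indicator {a..b} x \<partial>lborel)"
  proof (rule nn_integral_cong_AE)
    have "AE x in lborel. x \<noteq> a \<and> x \<noteq> b"
      using AE_lborel_singleton[of a] AE_lborel_singleton[of b] by eventually_elim auto
    thus "AE x in lborel. ennreal (f x) * indicator S x = ennreal (f x) * indicator {a..b} x"
    proof eventually_elim
      case (elim x)
      have "x \<in> S \<longleftrightarrow> x \<in> {a..b}" using elim assms(1,2) by auto
      thus ?case by (simp add: indicator_def)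
    qed
  qed
  also have "\<dots> = ennreal I" by (rule nn_integral_has_integral_lebesgue'[OF assms(5) assms(4)])
  finally show ?thesis .
qed

lemma ftc_eq:
  fixes F f :: "real \<Rightarrow> real"
  assumes "a \<le> b" "\<And>x. x \<in> {a..b} \<Longrightarrow> (F has_real_derivative f x) (at x)" "F b - F a = I"
  shows "(f has_integral I) {a..b}"
  using ftc_real[OF assms(1,2)] assms(3) by simp

lemma hi_lin: "a \<le> b \<Longrightarrow> ((\<lambda>x::real. c0 + c1 * x) has_integral (c0 * (b - a) + c1 * (b^2 - a^2) / 2)) {a..b}"
  by (rule ftc_eq[of a b "\<lambda>x. c0 * x + c1 * x^2 / 2"]) 
     (auto intro!: derivative_eq_intros simp: algebra_simps power2_eq_square diff_divide_distrib)

lemma hi_cube: "a \<le> b \<Longrightarrow> ((\<lambda>x::real. c * x^3) has_integral (c * (b^4 - a^4) / 4)) {a..b}"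
  by (rule ftc_eq[of a b "\<lambda>x. c * x^4 / 4"]) 
     (auto intro!: derivative_eq_intros simp: algebra_simps diff_divide_distrib)

lemma hi_inv2: "0 < a \<Longrightarrow> a \<le> b \<Longrightarrow> ((\<lambda>x::real. c / x^2) has_integral (c / a - c / b)) {a..b}"
  by (rule ftc_eq[of a b "\<lambda>x. - c / x"]) 
     (auto intro!: derivative_eq_intros simp: field_simps power2_eq_square)

lemma hi_inv3: "0 < a \<Longrightarrow> a \<le> b \<Longrightarrow> ((\<lambda>x::real. c / x^3) has_integral (c / (2 * a^2) - c / (2 * b^2))) {a..b}"
  by (rule ftc_eq[of a b "\<lambda>x. - c / (2 * x^2)"]) 
     (auto intro!: derivative_eq_intros simp: field_simps power2_eq_square power3_eq_cube)


context lsl begin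

lemma g_mono': "s \<in> {0<..1} \<Longrightarrow> t \<in> {0<..1} \<Longrightarrow> s \<le> t \<Longrightarrow> g s \<le> g t"
  using monotone_onD[OF g_mono, of s t] by auto
lemma psi_mono': "s \<in> {0<..1} \<Longrightarrow> t \<in> {0<..1} \<Longrightarrow> s \<le> t \<Longrightarrow> psi s \<le> psi t"
  using monotone_onD[OF psi_mono, of s t] by auto

lemma q_le_iff':
  assumes s: "s \<in> {0<..1}" and v: "g s < v" "v \<le> 1" and a: "a \<in> {0..1}"
  shows "q v \<le> a \<longleftrightarrow> v \<le> g a"
proof (cases "a = 0")
  case True
  have "s < q v" using q_gt[OF v(2) s v(1)] .
  moreover have "0 \<le> g s" using g_nn s by auto
  ultimately show ?thesis using True s v g0 by auto
next
  case False
  thus ?thesis using q_le_iff[OF v(2), of a] a by auto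
qed

lemma inner_L:
  assumes s: "s \<in> {0<..1}" and a: "a \<in> {0..1}"
  shows "(\<integral>\<^sup>+ v. indicator RL (s, v) * (indicator {0..a} (q v) * indicator {0..b} s) \<partial>lborel)
       = indicator {..b} s * ennreal (g a - g s)"
proof -
  have "(\<integral>\<^sup>+ v. indicator RL (s, v) * (indicator {0..a} (q v) * indicator {0..b} s) \<partial>lborel)
      = (\<integral>\<^sup>+ v. indicator {..b} s * indicator {g s<..g a} v \<partial>lborel)"
  proof (rule nn_integral_cong)
    fix v
    have "(s, v) \<in> RL \<and> q v \<in> {0..a} \<and> s \<in> {0..b} \<longleftrightarrow> s \<in> {..b} \<and> v \<in> {g s<..g a}"
    proof (cases "g s < v \<and> v \<le> 1")
      case True
      then show ?thesis using q_le_iff'[OF s _ _ a, of v] q_basic(3)[of v] s g_le1[OF a]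
        by (auto simp: RL_def)
    next
      case False
      then show ?thesis using s g_le1[OF a] by (auto simp: RL_def)
    qed
    thus "indicator RL (s, v) * (indicator {0..a} (q v) * indicator {0..b} s) = indicator {..b} s * (indicator {g s<..g a} v :: ennreal)"
      by (auto simp: indicator_def)
  qed
  also have "\<dots> = indicator {..b} s * emeasure lborel {g s<..g a}"
    by (rule nn_integral_cmult_indicator) simp
  also have "\<dots> = indicator {..b} s * ennreal (g a - g s)"
    by (cases "g s \<le> g a") (auto simp: ennreal_neg)
  finally show ?thesis .
qed

lemma r_le_iff':
  assumes s: "s \<in> {0<..1}" and u: "psi s < u" "u \<le> 1" and t: "t \<in> {0<..1}"
  shows "r u \<le> t \<longleftrightarrow> u \<le> psi t"
  using r_le_iff[OF u(2) t] .

lemma inner_D: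
  assumes s: "s \<in> {0<..1}" and t: "t \<in> {0<..1}"
  shows "(\<integral>\<^sup>+ u. indicator RD (s, u) * ennreal (2 * s / u^2) * indicator {0..t} (r u) \<partial>lborel)
       = (if psi s \<le> psi t then ennreal (2 * s / psi s - 2 * s / psi t) else 0)"
proof -
  have "(\<integral>\<^sup>+ u. indicator RD (s, u) * ennreal (2 * s / u^2) * indicator {0..t} (r u) \<partial>lborel)
      = (\<integral>\<^sup>+ u. ennreal (2 * s / u^2) * indicator {psi s<..psi t} u \<partial>lborel)"
  proof (rule nn_integral_cong)
    fix u
    have "(s, u) \<in> RD \<and> r u \<in> {0..t} \<longleftrightarrow> u \<in> {psi s<..psi t}"
    proof (cases "psi s < u \<and> u \<le> 1")
      case True
      then show ?thesis using r_le_iff'[OF s _ _ t, of u] r_basic(3)[of u] s psi_le1[OF t]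
        by (auto simp: RD_def)
    next
      case False
      then show ?thesis using s psi_le1[OF t] by (auto simp: RD_def)
    qed
    thus "indicator RD (s, u) * ennreal (2 * s / u^2) * indicator {0..t} (r u) = ennreal (2 * s / u^2) * indicator {psi s<..psi t} u"
      by (auto simp: indicator_def)
  qed
  also have "\<dots> = (if psi s \<le> psi t then ennreal (2 * s / psi s - 2 * s / psi t) else 0)"
  proof (cases "psi s \<le> psi t")
    case True
    have "(\<integral>\<^sup>+ u. ennreal (2 * s / u^2) * indicator {psi s<..psi t} u \<partial>lborel) = ennreal (2 * s / psi s - 2 * s / psi t)"
      by (rule nn_interval[OF _ _ True hi_inv2[OF psi_pos[OF s] True]]) (use s in auto)
    thus ?thesis using True by simp
  next
    case False
    thus ?thesis by simp
  qed
  finally show ?thesis .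
qed

end

context lsl begin

definition Fr :: "real \<Rightarrow> real \<Rightarrow> real \<Rightarrow> ennreal" where
  "Fr x y s = indicator {0<..1} s * (indicator {..y} s * ennreal (g x - g s) + indicator {..x} s * ennreal (g y - g s)
     + (if psi s \<le> psi (min x y) then ennreal (2 * s / psi s - 2 * s / psi (min x y)) else 0))"

lemma rect_closed: "{0..x::real} \<times> {0..y::real} \<in> sets borel"
  by (intro borel_closed closed_Times closed_atLeastAtMost)

lemma rect_mu:
  assumes x: "x \<in> {0<..1}" and y: "y \<in> {0<..1}"
  shows "emeasure mu ({0..x} \<times> {0..y}) = (\<integral>\<^sup>+ s. Fr x y s \<partial>lborel)"
proof -
  let ?R = "{0..x} \<times> {0..y}"
  have [measurable]: "?R \<in> sets borel" by (rule rect_closed)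
  have "emeasure mu ?R = (\<integral>\<^sup>+ p. w p * indicator ?R (T p) \<partial>M0)" by (rule emeasure_mu) simp
  also have "\<dots> = (\<integral>\<^sup>+ z. w (0, z) * indicator ?R (T (0, z)) \<partial>lborel) + (\<integral>\<^sup>+ z. w (1, z) * indicator ?R (T (1, z)) \<partial>lborel)
      + (\<integral>\<^sup>+ z. w (2, z) * indicator ?R (T (2, z)) \<partial>lborel)"
    by (rule nn_M0) measurable
  also have "(\<integral>\<^sup>+ z. w (0, z) * indicator ?R (T (0, z)) \<partial>lborel)
      = (\<integral>\<^sup>+ s. indicator {0<..1} s * (indicator {..y} s * ennreal (g x - g s)) \<partial>lborel)"
  proof -
    have "(\<integral>\<^sup>+ z. w (0, z) * indicator ?R (T (0, z)) \<partial>lborel)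
        = (\<integral>\<^sup>+ z. indicator RL z * (indicator {0..x} (q (snd z)) * indicator {0..y} (fst z)) \<partial>lborel)"
      by (simp add: w_def T_def indicator_times)
    also have "\<dots> = (\<integral>\<^sup>+ s. \<integral>\<^sup>+ v. indicator RL (s, v) * (indicator {0..x} (q v) * indicator {0..y} s) \<partial>lborel \<partial>lborel)"
    proof -
      have m: "(\<lambda>z. indicator RL z * (indicator {0..x} (q (snd z)) * indicator {0..y} (fst z)) :: ennreal) \<in> borel_measurable (borel \<Otimes>\<^sub>M borel)"
        by measurable
      show ?thesis using nn_pair_fst[OF m] by simp
    qed
    also have "\<dots> = (\<integral>\<^sup>+ s. indicator {0<..1} s * (indicator {..y} s * ennreal (g x - g s)) \<partial>lborel)"
    proof (rule nn_integral_cong)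
      fix s :: real
      show "(\<integral>\<^sup>+ v. indicator RL (s, v) * (indicator {0..x} (q v) * indicator {0..y} s) \<partial>lborel)
          = indicator {0<..1} s * (indicator {..y} s * ennreal (g x - g s))"
      proof (cases "s \<in> {0<..1}")
        case True
        thus ?thesis using inner_L[OF True, of x y] x by simp
      next
        case False
        have z: "\<And>v. indicator RL (s, v) = (0::ennreal)" using False unfolding RL_def by (simp add: indicator_def) blast
        have z2: "indicator {0<..1} s = (0::ennreal)" using False by (simp add: indicator_def)
        show ?thesis unfolding z z2 by simp
      qed
    qed
    finally show ?thesis .
  qed
  also have "(\<integral>\<^sup>+ z. w (1, z) * indicator ?R (T (1, z)) \<partial>lborel)
      = (\<integral>\<^sup>+ s. indicator {0<..1} s * (indicator {..x} s * ennreal (g y - g s)) \<partial>lborel)"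
  proof -
    have "(\<integral>\<^sup>+ z. w (1, z) * indicator ?R (T (1, z)) \<partial>lborel)
        = (\<integral>\<^sup>+ z. indicator RL z * (indicator {0..y} (q (snd z)) * indicator {0..x} (fst z)) \<partial>lborel)"
    proof (rule nn_integral_cong)
      fix z :: "real \<times> real"
      show "w (1, z) * indicator ?R (T (1, z)) = indicator RL z * (indicator {0..y} (q (snd z)) * indicator {0..x} (fst z))"
        by (simp add: w_def T_def indicator_times) (simp add: indicator_def)
    qed
    also have "\<dots> = (\<integral>\<^sup>+ s. \<integral>\<^sup>+ v. indicator RL (s, v) * (indicator {0..y} (q v) * indicator {0..x} s) \<partial>lborel \<partial>lborel)"
    proof -
      have m: "(\<lambda>z. indicator RL z * (indicator {0..y} (q (snd z)) * indicator {0..x} (fst z)) :: ennreal) \<in> borel_measurable (borel \<Otimes>\<^sub>M borel)"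
        by measurable
      show ?thesis using nn_pair_fst[OF m] by simp
    qed
    also have "\<dots> = (\<integral>\<^sup>+ s. indicator {0<..1} s * (indicator {..x} s * ennreal (g y - g s)) \<partial>lborel)"
    proof (rule nn_integral_cong)
      fix s :: real
      show "(\<integral>\<^sup>+ v. indicator RL (s, v) * (indicator {0..y} (q v) * indicator {0..x} s) \<partial>lborel)
          = indicator {0<..1} s * (indicator {..x} s * ennreal (g y - g s))"
      proof (cases "s \<in> {0<..1}")
        case True
        thus ?thesis using inner_L[OF True, of y x] y by simp
      next
        case False
        have z: "\<And>v. indicator RL (s, v) = (0::ennreal)" using False unfolding RL_def by (simp add: indicator_def) blast
        have z2: "indicator {0<..1} s = (0::ennreal)" using False by (simp add: indicator_def)
        show ?thesis unfolding z z2 by simp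
      qed
    qed
    finally show ?thesis .
  qed
  also have "(\<integral>\<^sup>+ z. w (2, z) * indicator ?R (T (2, z)) \<partial>lborel)
      = (\<integral>\<^sup>+ s. indicator {0<..1} s * (if psi s \<le> psi (min x y) then ennreal (2 * s / psi s - 2 * s / psi (min x y)) else 0) \<partial>lborel)"
  proof -
    have "(\<integral>\<^sup>+ z. w (2, z) * indicator ?R (T (2, z)) \<partial>lborel)
        = (\<integral>\<^sup>+ z. indicator RD z * ennreal (2 * fst z / (snd z)^2) * indicator {0..min x y} (r (snd z)) \<partial>lborel)"
      by (rule nn_integral_cong) (simp add: w_def T_def indicator_def)
    also have "\<dots> = (\<integral>\<^sup>+ s. \<integral>\<^sup>+ u. indicator RD (s, u) * ennreal (2 * s / u^2) * indicator {0..min x y} (r u) \<partial>lborel \<partial>lborel)"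
    proof -
      have m: "(\<lambda>z. indicator RD z * ennreal (2 * fst z / (snd z)^2) * indicator {0..min x y} (r (snd z))) \<in> borel_measurable (borel \<Otimes>\<^sub>M borel)"
        by measurable
      show ?thesis using nn_pair_fst[OF m] by simp
    qed
    also have "\<dots> = (\<integral>\<^sup>+ s. indicator {0<..1} s * (if psi s \<le> psi (min x y) then ennreal (2 * s / psi s - 2 * s / psi (min x y)) else 0) \<partial>lborel)"
    proof (rule nn_integral_cong)
      fix s :: real
      have m: "min x y \<in> {0<..1}" using x y by auto
      show "(\<integral>\<^sup>+ u. indicator RD (s, u) * ennreal (2 * s / u^2) * indicator {0..min x y} (r u) \<partial>lborel)
          = indicator {0<..1} s * (if psi s \<le> psi (min x y) then ennreal (2 * s / psi s - 2 * s / psi (min x y)) else 0)"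
      proof (cases "s \<in> {0<..1}")
        case True
        thus ?thesis using inner_D[OF True m] by simp
      next
        case False
        have z: "\<And>v. indicator RD (s, v) = (0::ennreal)" using False unfolding RD_def by (simp add: indicator_def) blast
        have z2: "indicator {0<..1} s = (0::ennreal)" using False by (simp add: indicator_def)
        show ?thesis unfolding z z2 by simp
      qed
    qed
    finally show ?thesis .
  qed
  also have "(\<integral>\<^sup>+ s. indicator {0<..1} s * (indicator {..y} s * ennreal (g x - g s)) \<partial>lborel)
     + (\<integral>\<^sup>+ s. indicator {0<..1} s * (indicator {..x} s * ennreal (g y - g s)) \<partial>lborel)
     + (\<integral>\<^sup>+ s. indicator {0<..1} s * (if psi s \<le> psi (min x y) then ennreal (2 * s / psi s - 2 * s / psi (min x y)) else 0) \<partial>lborel)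
     = (\<integral>\<^sup>+ s. Fr x y s \<partial>lborel)"
  proof -
    let ?f1 = "\<lambda>s. indicator {0<..1} s * (indicator {..y} s * ennreal (g x - g s))"
    let ?f2 = "\<lambda>s. indicator {0<..1} s * (indicator {..x} s * ennreal (g y - g s))"
    let ?f3 = "\<lambda>s. indicator {0<..1} s * (if psi s \<le> psi (min x y) then ennreal (2 * s / psi s - 2 * s / psi (min x y)) else 0)"
    have m1: "?f1 \<in> borel_measurable borel" by measurable
    have m2: "?f2 \<in> borel_measurable borel" by measurable
    have m3: "?f3 \<in> borel_measurable borel" by measurable
    have "(\<integral>\<^sup>+ s. Fr x y s \<partial>lborel) = (\<integral>\<^sup>+ s. (?f1 s + ?f2 s) + ?f3 s \<partial>lborel)"
      by (rule nn_integral_cong) (simp add: Fr_def distrib_left)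
    also have "\<dots> = (\<integral>\<^sup>+ s. ?f1 s + ?f2 s \<partial>lborel) + integral\<^sup>N lborel ?f3"
      by (rule nn_integral_add) (use m1 m2 m3 in auto)
    also have "(\<integral>\<^sup>+ s. ?f1 s + ?f2 s \<partial>lborel) = integral\<^sup>N lborel ?f1 + integral\<^sup>N lborel ?f2"
      by (rule nn_integral_add) (use m1 m2 in auto)
    finally show ?thesis by simp
  qed
  finally show ?thesis .
qed

end

context lsl begin

lemma gd: "s \<in> {0<..1} \<Longrightarrow> s * g s = d s" by (simp add: g_def)
lemma psid: "s \<in> {0<..1} \<Longrightarrow> 2 * s / psi s = 2 * g s"
  using d_pos[of s] by (simp add: psi_def g_def field_simps power2_eq_square)

lemma Fr_sym: "Fr x y s = Fr y x s"
  unfolding Fr_def by (simp add: add_ac min.commute)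

lemma Fr_pw:
  assumes y: "0 < y" "y \<le> x" "x \<le> 1"
  shows "Fr x y s = ennreal ((g x + g y) + (- 2 / psi y) * s) * indicator {0<..y} s"
proof -
  have x01: "x \<in> {0<..1}" and y01: "y \<in> {0<..1}" using y by auto
  have m: "min x y = y" using y by simp
  show ?thesis
  proof (cases "s \<in> {0<..1}")
    case False
    thus ?thesis using y by (auto simp: Fr_def indicator_def)
  next
    case s: True
    show ?thesis
    proof (cases "s \<le> y")
      case True
      have gs: "g s \<le> g y" "g y \<le> g x" using g_mono'[OF s y01 True] g_mono'[OF y01 x01 y(2)] by auto
      have ps: "psi s \<le> psi y" using psi_mono'[OF s y01 True] .
      have pp: "0 < psi s" "0 < psi y" using psi_pos s y01 by auto
      have c: "2 * s / psi y \<le> 2 * s / psi s" using pp ps s by (intro divide_left_mono) auto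
      have "Fr x y s = ennreal (g x - g s) + ennreal (g y - g s) + ennreal (2 * s / psi s - 2 * s / psi y)"
        using s True ps m y by (simp add: Fr_def indicator_def)
      also have "\<dots> = ennreal ((g x - g s) + (g y - g s) + (2 * s / psi s - 2 * s / psi y))"
      proof -
        have "ennreal (g x - g s) + ennreal (g y - g s) = ennreal ((g x - g s) + (g y - g s))"
          by (rule ennreal_plus[symmetric]) (use gs in auto)
        moreover have "ennreal ((g x - g s) + (g y - g s)) + ennreal (2 * s / psi s - 2 * s / psi y)
            = ennreal ((g x - g s) + (g y - g s) + (2 * s / psi s - 2 * s / psi y))"
          by (rule ennreal_plus[symmetric]) (use gs c in auto)
        ultimately show ?thesis by simp
      qed
      also have "(g x - g s) + (g y - g s) + (2 * s / psi s - 2 * s / psi y) = (g x + g y) + (- 2 / psi y) * s"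
        using psid[OF s] by simp
      finally show ?thesis using s True by (simp add: indicator_def)
    next
      case False
      have s': "y \<le> s" using False by simp
      have gs: "g y \<le> g s" using g_mono'[OF y01 s s'] .
      have ps: "psi y \<le> psi s" using psi_mono'[OF y01 s s'] .
      have "Fr x y s = indicator {..x} s * ennreal (g y - g s) + (if psi s \<le> psi y then ennreal (2 * s / psi s - 2 * s / psi y) else 0)"
        using s False m by (simp add: Fr_def indicator_def)
      also have "\<dots> = 0"
      proof -
        have "ennreal (g y - g s) = 0" using gs by (simp add: ennreal_neg)
        moreover have "(if psi s \<le> psi y then ennreal (2 * s / psi s - 2 * s / psi y) else 0) = 0"
          using ps by auto
        ultimately show ?thesis by simp
      qed
      finally show ?thesis using False by (simp add: indicator_def)
    qed
  qed
qed

lemma Fr_val: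
  assumes y: "0 < y" "y \<le> x" "x \<le> 1"
  shows "(\<integral>\<^sup>+ s. Fr x y s \<partial>lborel) = ennreal (y * g x)"
proof -
  have x01: "x \<in> {0<..1}" and y01: "y \<in> {0<..1}" using y by auto
  have pp: "0 < psi y" using psi_pos y01 by auto
  have "(\<integral>\<^sup>+ s. Fr x y s \<partial>lborel) = (\<integral>\<^sup>+ s. ennreal ((g x + g y) + (- 2 / psi y) * s) * indicator {0<..y} s \<partial>lborel)"
    using Fr_pw[OF y] by simp
  also have "\<dots> = ennreal ((g x + g y) * (y - 0) + (- 2 / psi y) * (y^2 - 0^2) / 2)"
  proof (rule nn_interval[OF _ _ _ hi_lin])
    fix s assume s: "s \<in> {0..y}"
    have "2 * s / psi y \<le> 2 * y / psi y" using s pp by (intro divide_right_mono) auto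
    also have "2 * y / psi y = 2 * g y" using psid[OF y01] .
    also have "\<dots> \<le> g x + g y" using g_mono'[OF y01 x01 y(2)] by simp
    finally show "0 \<le> (g x + g y) + (- 2 / psi y) * s" by simp
  qed (use y in auto)
  also have "(g x + g y) * (y - 0) + (- 2 / psi y) * (y^2 - 0^2) / 2 = y * g x"
  proof -
    have "(- 2 / psi y) * (y^2 - 0^2) / 2 = - (y * (2 * y / psi y)) / 2" by (simp add: field_simps power2_eq_square)
    also have "\<dots> = - (y * g y)" using psid[OF y01] by simp
    finally show ?thesis by (simp add: algebra_simps)
  qed
  finally show ?thesis .
qed

end

context lsl begin

lemma T_in:
  assumes "w p \<noteq> 0"
  shows "T p \<in> {0..1} \<times> {0..1}"
proof -
  obtain i a b where p: "p = (i, (a, b))" by (metis prod.exhaust)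
  have "i \<noteq> 2 \<Longrightarrow> (a, b) \<in> RL" using assms p by (auto simp: w_def indicator_def split: if_splits)
  thus ?thesis using p q_basic(3,4)[of b] r_basic(3,4)[of b] by (auto simp: T_def RL_def)
qed

lemma rect_zero:
  assumes "x \<in> {0..1}" "y \<in> {0..1}" "x = 0 \<or> y = 0"
  shows "emeasure mu ({0..x} \<times> {0..y}) = 0"
proof -
  have "emeasure mu ({0..x} \<times> {0..y}) = (\<integral>\<^sup>+ p. w p * indicator ({0..x} \<times> {0..y}) (T p) \<partial>M0)"
    by (rule emeasure_mu) (rule rect_closed)
  also have "\<dots> = (\<integral>\<^sup>+ p. 0 \<partial>M0)"
  proof (rule nn_integral_cong)
    fix p :: "nat \<times> real \<times> real"
    assume sp: "p \<in> space M0"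
    obtain i a b where p: "p = (i, (a, b))" by (metis prod.exhaust)
    have i3: "i \<in> {0,1,2}" using sp p by (simp add: M0_def space_pair_measure)
    show "w p * indicator ({0..x} \<times> {0..y}) (T p) = 0"
    proof (cases "w p = 0")
      case False
      show ?thesis
      proof (cases "i = 2")
        case True
        hence RD: "(a, b) \<in> RD" using False p by (auto simp: w_def indicator_def split: if_splits)
        hence "a < r b" using r_gt[of b a] by (auto simp: RD_def)
        moreover have "0 < a" using RD by (auto simp: RD_def)
        ultimately show ?thesis using True p assms by (auto simp: T_def indicator_def)
      next
        case False2: False
        hence RL: "(a, b) \<in> RL" using False p by (auto simp: w_def indicator_def split: if_splits)
        hence "a < q b" using q_gt[of b a] by (auto simp: RL_def)
        moreover have "0 < a" using RL by (auto simp: RL_def)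
        moreover have "i = 0 \<or> i = 1" using i3 False2 by auto
        ultimately show ?thesis using p assms by (auto simp: T_def indicator_def)
      qed
    qed simp
  qed
  finally show ?thesis by simp
qed


lemma compl_null: "emeasure mu (- ({0..1} \<times> {0..1})) = 0"
proof -
  have cb: "- ({0..1::real} \<times> {0..1::real}) \<in> sets borel"
    by (intro borel_open open_Compl closed_Times closed_atLeastAtMost)
  have "emeasure mu (- ({0..1} \<times> {0..1})) = (\<integral>\<^sup>+ p. w p * indicator (- ({0..1} \<times> {0..1})) (T p) \<partial>M0)"
    by (rule emeasure_mu) (rule cb)
  also have "\<dots> = (\<integral>\<^sup>+ p. 0 \<partial>M0)"
  proof (rule nn_integral_cong)
    fix p show "w p * indicator (- ({0..1} \<times> {0..1})) (T p) = (0::ennreal)"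
      using T_in[of p] by (cases "w p = 0") (auto simp: indicator_def)
  qed
  finally show ?thesis by simp
qed

lemma rect_val:
  assumes x: "x \<in> {0..1}" and y: "y \<in> {0..1}"
  shows "emeasure mu ({0..x} \<times> {0..y}) = ennreal (S_diag \<delta> x y)"
proof (cases "x = 0 \<or> y = 0")
  case True
  hence "S_diag \<delta> x y = 0" using x y by (auto simp: S_diag_def)
  thus ?thesis using rect_zero[OF x y True] by simp
next
  case False
  hence x01: "x \<in> {0<..1}" and y01: "y \<in> {0<..1}" using x y by auto
  show ?thesis
  proof (cases "y \<le> x")
    case True
    have "emeasure mu ({0..x} \<times> {0..y}) = ennreal (y * g x)"
      using rect_mu[OF x01 y01] Fr_val[of y x] True x01 y01 by simp
    moreover have "S_diag \<delta> x y = y * g x" using True x01 d_eq[of x] by (simp add: S_diag_def g_def)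
    ultimately show ?thesis by simp
  next
    case False
    have "emeasure mu ({0..x} \<times> {0..y}) = (\<integral>\<^sup>+ s. Fr y x s \<partial>lborel)"
      using rect_mu[OF x01 y01] Fr_sym[of x y] by simp
    also have "\<dots> = ennreal (x * g y)" using Fr_val[of x y] False x01 y01 by simp
    finally show ?thesis using False y01 d_eq[of y] by (simp add: S_diag_def g_def)
  qed
qed

lemma copula_mu: "copula_measure (S_diag \<delta>) = mu"
  by (rule copula_measure_eq) (use sets_mu compl_null rect_val in auto)

end

context lsl begin

lemma Sd_meas2: "(\<lambda>p. S_diag d (fst p) (snd p)) \<in> borel_measurable (borel \<Otimes>\<^sub>M borel)"
  unfolding S_diag_def by measurable
lemma Sd_meas: "(\<lambda>p. S_diag d (fst p) (snd p)) \<in> borel_measurable borel"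
  by (rule meas_prod_borel[OF Sd_meas2])

lemma S_d_low:
  assumes "(s, v) \<in> RL"
  shows "S_diag d (q v) s = s * v" "S_diag d s (q v) = s * v"
proof -
  have s: "s \<in> {0<..1}" and v: "g s < v" "v \<le> 1" using assms by (auto simp: RL_def)
  have lt: "s < q v" using q_gt[OF v(2) s v(1)] .
  have qe: "g (q v) = v" using q_eq[OF v(2)] lt s by auto
  have "d (q v) / q v = v" using qe by (simp add: g_def)
  hence e: "s * d (q v) / q v = s * v" by (metis times_divide_eq_right)
  thus "S_diag d (q v) s = s * v" "S_diag d s (q v) = s * v" using lt by (auto simp: S_diag_def)
qed

lemma RD_iff: "(s, u) \<in> RD \<longleftrightarrow> u \<in> {0<..1} \<and> s \<in> {0<..<r u}"
proof
  assume a: "(s, u) \<in> RD"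
  hence s: "s \<in> {0<..1}" and u: "psi s < u" "u \<le> 1" by (auto simp: RD_def)
  have "0 < u" using psi_pos[OF s] u by simp
  moreover have "s < r u" using r_gt[OF u(2) s u(1)] .
  ultimately show "u \<in> {0<..1} \<and> s \<in> {0<..<r u}" using s u by auto
next
  assume a: "u \<in> {0<..1} \<and> s \<in> {0<..<r u}"
  hence s: "s \<in> {0<..1}" using r_basic(4)[of u] by auto
  have "\<not> r u \<le> s" using a by auto
  hence "\<not> u \<le> psi s" using r_le_iff[of u s] a s by auto
  thus "(s, u) \<in> RD" using a s by (auto simp: RD_def)
qed

lemma S_d_diag:
  assumes "(s, u) \<in> RD"
  shows "S_diag d (r u) (r u) = (r u)^2 / u"
proof -
  have u: "u \<in> {0<..1}" and s: "s \<in> {0<..<r u}" using assms RD_iff by auto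
  have rp: "0 < r u" using s by auto
  have r1: "r u \<in> {0<..1}" using rp r_basic(4)[of u] by auto
  have pe: "psi (r u) = u" using r_eq[of u] u rp by auto
  have dp: "0 < d (r u)" using d_pos[OF r1] .
  have "d (r u) = (r u)^2 / u" using pe dp u by (auto simp: psi_def field_simps)
  thus ?thesis using rp by (simp add: S_diag_def)
qed

definition Lint :: ennreal where "Lint = (\<integral>\<^sup>+ s. indicator {0<..1} s * ennreal (s * (1 - (g s)^2) / 2) \<partial>lborel)"
definition Bint :: ennreal where "Bint = (\<integral>\<^sup>+ u. indicator {0<..1} u * ennreal ((r u)^4 / u^3) \<partial>lborel)"

lemma low_term:
  assumes "\<And>s v. (s, v) \<in> RL \<Longrightarrow> h (s, v) = s * v" and [measurable]: "h \<in> borel_measurable borel"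
  shows "(\<integral>\<^sup>+ z. indicator RL z * ennreal (h z) \<partial>lborel) = Lint"
proof -
  have "(\<integral>\<^sup>+ z. indicator RL z * ennreal (h z) \<partial>lborel) = (\<integral>\<^sup>+ z. indicator RL z * ennreal (fst z * snd z) \<partial>lborel)"
    by (rule nn_integral_cong) (use assms(1) in \<open>auto simp: indicator_def\<close>)
  also have "\<dots> = (\<integral>\<^sup>+ s. \<integral>\<^sup>+ v. indicator RL (s, v) * ennreal (s * v) \<partial>lborel \<partial>lborel)"
  proof -
    have m: "(\<lambda>z. indicator RL z * ennreal (fst z * snd z)) \<in> borel_measurable (borel \<Otimes>\<^sub>M borel)" by measurable
    show ?thesis using nn_pair_fst[OF m] by simp
  qed
  also have "\<dots> = Lint" unfolding Lint_def
  proof (rule nn_integral_cong)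
    fix s :: real
    show "(\<integral>\<^sup>+ v. indicator RL (s, v) * ennreal (s * v) \<partial>lborel) = indicator {0<..1} s * ennreal (s * (1 - (g s)^2) / 2)"
    proof (cases "s \<in> {0<..1}")
      case True
      have gs: "0 \<le> g s" "g s \<le> 1" using g_nn[of s] g_le1[of s] True by auto
      have "(\<integral>\<^sup>+ v. indicator RL (s, v) * ennreal (s * v) \<partial>lborel) = (\<integral>\<^sup>+ v. ennreal (0 + s * v) * indicator {g s<..1} v \<partial>lborel)"
        by (rule nn_integral_cong) (use True in \<open>auto simp: RL_def indicator_def\<close>)
      also have "\<dots> = ennreal (0 * (1 - g s) + s * (1^2 - (g s)^2) / 2)"
        by (rule nn_interval[OF _ _ _ hi_lin]) (use gs True in auto)
      finally show ?thesis using True by simp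
    next
      case False
      have z: "\<And>v. indicator RL (s, v) = (0::ennreal)" using False unfolding RL_def by (simp add: indicator_def) blast
      have z2: "indicator {0<..1} s = (0::ennreal)" using False by (simp add: indicator_def)
      show ?thesis unfolding z z2 by simp
    qed
  qed
  finally show ?thesis .
qed


lemma diag_term:
  "(\<integral>\<^sup>+ z. indicator RD z * ennreal (2 * fst z / (snd z)^2) * ennreal (S_diag d (r (snd z)) (r (snd z))) \<partial>lborel) = Bint"
proof -
  have "(\<integral>\<^sup>+ z. indicator RD z * ennreal (2 * fst z / (snd z)^2) * ennreal (S_diag d (r (snd z)) (r (snd z))) \<partial>lborel)
      = (\<integral>\<^sup>+ z. indicator RD z * ennreal (2 * fst z * (r (snd z))^2 / (snd z)^3) \<partial>lborel)"
  proof (rule nn_integral_cong)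
    fix z :: "real \<times> real"
    obtain s u where z: "z = (s, u)" by (cases z)
    show "indicator RD z * ennreal (2 * fst z / (snd z)^2) * ennreal (S_diag d (r (snd z)) (r (snd z)))
        = indicator RD z * ennreal (2 * fst z * (r (snd z))^2 / (snd z)^3)"
    proof (cases "z \<in> RD")
      case True
      have u: "u \<in> {0<..1}" and sp: "0 < s" using True z RD_iff by auto
      have "ennreal (2 * s / u^2) * ennreal ((r u)^2 / u) = ennreal (2 * s / u^2 * ((r u)^2 / u))"
        using u sp by (intro ennreal_mult[symmetric]) auto
      also have "2 * s / u^2 * ((r u)^2 / u) = 2 * s * (r u)^2 / u^3"
        by (simp add: power2_eq_square power3_eq_cube)
      finally show ?thesis using True z S_d_diag[of s u] by simp
    qed simp
  qed
  also have "\<dots> = (\<integral>\<^sup>+ u. \<integral>\<^sup>+ s. indicator RD (s, u) * ennreal (2 * s * (r u)^2 / u^3) \<partial>lborel \<partial>lborel)"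
  proof -
    have m: "(\<lambda>z. indicator RD z * ennreal (2 * fst z * (r (snd z))^2 / (snd z)^3)) \<in> borel_measurable (borel \<Otimes>\<^sub>M borel)"
      by measurable
    show ?thesis using nn_pair_snd[OF m] by simp
  qed
  also have "\<dots> = Bint" unfolding Bint_def
  proof (rule nn_integral_cong)
    fix u :: real
    show "(\<integral>\<^sup>+ s. indicator RD (s, u) * ennreal (2 * s * (r u)^2 / u^3) \<partial>lborel) = indicator {0<..1} u * ennreal ((r u)^4 / u^3)"
    proof (cases "u \<in> {0<..1}")
      case True
      have r0: "0 \<le> r u" using r_basic(3) .
      have "(\<integral>\<^sup>+ s. indicator RD (s, u) * ennreal (2 * s * (r u)^2 / u^3) \<partial>lborel)
          = (\<integral>\<^sup>+ s. ennreal (0 + (2 * (r u)^2 / u^3) * s) * indicator {0<..<r u} s \<partial>lborel)"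
        by (rule nn_integral_cong) (use True in \<open>auto simp: RD_iff indicator_def\<close>)
      also have "\<dots> = ennreal (0 * (r u - 0) + (2 * (r u)^2 / u^3) * ((r u)^2 - 0^2) / 2)"
        by (rule nn_interval[OF _ _ _ hi_lin]) (use True r0 in auto)
      also have "0 * (r u - 0) + (2 * (r u)^2 / u^3) * ((r u)^2 - 0^2) / 2 = (r u)^4 / u^3"
        by (simp add: field_simps power2_eq_square power4_eq_xxxx)
      finally show ?thesis using True by simp
    next
      case False
      hence "\<And>s. indicator RD (s, u) = (0::ennreal)" by (simp add: RD_iff indicator_def) blast
      thus ?thesis using False by simp
    qed
  qed
  finally show ?thesis .
qed

lemma X_eq: "(\<integral>\<^sup>+ p. ennreal (S_diag d (fst p) (snd p)) \<partial>mu) = Lint + Lint + Bint"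
proof -
  have [measurable]: "(\<lambda>p. S_diag d (fst p) (snd p)) \<in> borel_measurable borel" by (rule Sd_meas)
  have "(\<integral>\<^sup>+ p. ennreal (S_diag d (fst p) (snd p)) \<partial>mu) = (\<integral>\<^sup>+ p. w p * ennreal (S_diag d (fst (T p)) (snd (T p))) \<partial>M0)"
    by (rule nn_integral_mu) measurable
  also have "\<dots> = (\<integral>\<^sup>+ z. w (0, z) * ennreal (S_diag d (fst (T (0, z))) (snd (T (0, z)))) \<partial>lborel)
     + (\<integral>\<^sup>+ z. w (1, z) * ennreal (S_diag d (fst (T (1, z))) (snd (T (1, z)))) \<partial>lborel)
     + (\<integral>\<^sup>+ z. w (2, z) * ennreal (S_diag d (fst (T (2, z))) (snd (T (2, z)))) \<partial>lborel)"
    by (rule nn_M0) measurable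
  also have "(\<integral>\<^sup>+ z. w (0, z) * ennreal (S_diag d (fst (T (0, z))) (snd (T (0, z)))) \<partial>lborel) = Lint"
  proof -
    have m: "(\<lambda>z. S_diag d (q (snd z)) (fst z)) \<in> borel_measurable borel"
      by (rule meas_prod_borel) (unfold S_diag_def, measurable)
    show ?thesis using low_term[of "\<lambda>z. S_diag d (q (snd z)) (fst z)", OF _ m] S_d_low(1)
      by (simp add: w_def T_def)
  qed
  also have "(\<integral>\<^sup>+ z. w (1, z) * ennreal (S_diag d (fst (T (1, z))) (snd (T (1, z)))) \<partial>lborel) = Lint"
  proof -
    have m: "(\<lambda>z. S_diag d (fst z) (q (snd z))) \<in> borel_measurable borel"
      by (rule meas_prod_borel) (unfold S_diag_def, measurable)
    show ?thesis using low_term[of "\<lambda>z. S_diag d (fst z) (q (snd z))", OF _ m] S_d_low(2)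
      by (simp add: w_def T_def)
  qed
  also have "(\<integral>\<^sup>+ z. w (2, z) * ennreal (S_diag d (fst (T (2, z))) (snd (T (2, z)))) \<partial>lborel) = Bint"
    using diag_term by (simp add: w_def T_def)
  finally show ?thesis .
qed

end

context lsl begin

lemma r_le_u: assumes u: "u \<in> {0<..1}" shows "r u \<le> u"
proof -
  have "d u \<le> u" "0 < d u" using d_le[of u] d_pos[OF u] u by auto
  hence "u \<le> psi u" using u by (simp add: psi_def field_simps power2_eq_square)
  thus ?thesis using r_le_iff[of u u] u by auto
qed

lemma t_psi: "t \<in> {0<..1} \<Longrightarrow> t / psi t = g t"
  using d_pos[of t] by (simp add: psi_def g_def field_simps power2_eq_square)

lemma kk_mono:
  assumes "0 < u1" "u1 \<le> u2" "u2 \<le> 1"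
  shows "r u1 / u1 \<le> r u2 / u2"
proof (cases "r u1 = 0")
  case True
  thus ?thesis using r_basic(3)[of u2] assms by simp
next
  case False
  hence p1: "0 < r u1" using r_basic(3)[of u1] by simp
  have le: "r u1 \<le> r u2" using ginv_mono[of psi, OF psi1] assms unfolding r_def mono_def by auto
  hence p2: "0 < r u2" using p1 by simp
  have i1: "r u1 \<in> {0<..1}" and i2: "r u2 \<in> {0<..1}" using p1 p2 r_basic(4) by auto
  have e1: "psi (r u1) = u1" using r_eq[of u1] assms p1 by auto
  have e2: "psi (r u2) = u2" using r_eq[of u2] assms p2 by auto
  have "r u1 / u1 = g (r u1)" using t_psi[OF i1] e1 by simp
  also have "\<dots> \<le> g (r u2)" using g_mono'[OF i1 i2 le] .
  also have "\<dots> = r u2 / u2" using t_psi[OF i2] e2 by simp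
  finally show ?thesis .
qed

lemma fin_le1:
  fixes f :: "real \<Rightarrow> real"
  assumes "\<And>x. x \<in> {0<..1} \<Longrightarrow> f x \<le> 1"
  shows "(\<integral>\<^sup>+ x. indicator {0<..1} x * ennreal (f x) \<partial>lborel) \<le> 1"
proof -
  have "(\<integral>\<^sup>+ x. indicator {0<..1} x * ennreal (f x) \<partial>lborel) \<le> (\<integral>\<^sup>+ x. 1 * indicator {0<..1::real} x \<partial>lborel)"
    by (intro nn_integral_mono) (use assms in \<open>auto simp: indicator_def\<close>)
  also have "\<dots> = 1" by (subst nn_integral_cmult_indicator) auto
  finally show ?thesis .
qed

lemma layer:
  fixes k KK :: "real \<Rightarrow> real"
  assumes hk: "\<And>a. a \<in> {0<..1} \<Longrightarrow> (k has_integral KK a) {a..1}"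
    and kn: "\<And>u. u \<in> {0<..1} \<Longrightarrow> 0 \<le> k u"
    and [measurable]: "k \<in> borel_measurable borel"
  shows "(\<integral>\<^sup>+ x. indicator {0<..1} x * ennreal (x^3 * KK (psi x)) \<partial>lborel)
       = (\<integral>\<^sup>+ u. indicator {0<..1} u * ennreal (k u * (r u)^4 / 4) \<partial>lborel)"
proof -
  have "(\<integral>\<^sup>+ x. indicator {0<..1} x * ennreal (x^3 * KK (psi x)) \<partial>lborel)
      = (\<integral>\<^sup>+ x. \<integral>\<^sup>+ u. indicator RD (x, u) * ennreal (x^3 * k u) \<partial>lborel \<partial>lborel)"
  proof (rule nn_integral_cong)
    fix x :: real
    show "indicator {0<..1} x * ennreal (x^3 * KK (psi x)) = (\<integral>\<^sup>+ u. indicator RD (x, u) * ennreal (x^3 * k u) \<partial>lborel)"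
    proof (cases "x \<in> {0<..1}")
      case True
      have p: "psi x \<in> {0<..1}" using psi_pos[OF True] psi_le1[OF True] by auto
      have "(\<integral>\<^sup>+ u. indicator RD (x, u) * ennreal (x^3 * k u) \<partial>lborel) = (\<integral>\<^sup>+ u. ennreal (x^3 * k u) * indicator {psi x<..1} u \<partial>lborel)"
        by (rule nn_integral_cong) (use True in \<open>auto simp: RD_def indicator_def\<close>)
      also have "\<dots> = ennreal (x^3 * KK (psi x))"
        by (rule nn_interval[OF _ _ _ has_integral_mult_right[OF hk[OF p]]]) (use p True kn in auto)
      finally show ?thesis using True by simp
    next
      case False
      hence "\<And>u. indicator RD (x, u) = (0::ennreal)" unfolding RD_def by (simp add: indicator_def) blast
      thus ?thesis using False by simp
    qed
  qed
  also have "\<dots> = (\<integral>\<^sup>+ u. \<integral>\<^sup>+ x. indicator RD (x, u) * ennreal (x^3 * k u) \<partial>lborel \<partial>lborel)"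
  proof -
    have m: "(\<lambda>z. indicator RD z * ennreal ((fst z)^3 * k (snd z))) \<in> borel_measurable (borel \<Otimes>\<^sub>M borel)"
      by measurable
    show ?thesis using nn_pair_fst[OF m] nn_pair_snd[OF m] by simp
  qed
  also have "\<dots> = (\<integral>\<^sup>+ u. indicator {0<..1} u * ennreal (k u * (r u)^4 / 4) \<partial>lborel)"
  proof (rule nn_integral_cong)
    fix u :: real
    show "(\<integral>\<^sup>+ x. indicator RD (x, u) * ennreal (x^3 * k u) \<partial>lborel) = indicator {0<..1} u * ennreal (k u * (r u)^4 / 4)"
    proof (cases "u \<in> {0<..1}")
      case True
      have r0: "0 \<le> r u" using r_basic(3) .
      have "(\<integral>\<^sup>+ x. indicator RD (x, u) * ennreal (x^3 * k u) \<partial>lborel)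
          = (\<integral>\<^sup>+ x. ennreal (k u * x^3) * indicator {0<..<r u} x \<partial>lborel)"
        by (rule nn_integral_cong) (use True in \<open>auto simp: RD_iff indicator_def mult.commute\<close>)
      also have "\<dots> = ennreal (k u * ((r u)^4 - 0^4) / 4)"
        by (rule nn_interval[OF _ _ _ hi_cube]) (use True r0 kn in auto)
      finally show ?thesis using True by simp
    next
      case False
      hence "\<And>x. indicator RD (x, u) = (0::ennreal)" by (simp add: RD_iff indicator_def) blast
      thus ?thesis using False by simp
    qed
  qed
  finally show ?thesis .
qed

end

context lsl begin

definition I1 :: ennreal where "I1 = (\<integral>\<^sup>+ x. indicator {0<..1} x * ennreal (x * d x) \<partial>lborel)"
definition I2 :: ennreal where "I2 = (\<integral>\<^sup>+ x. indicator {0<..1} x * ennreal ((d x)^2 / x) \<partial>lborel)"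
definition Aint :: ennreal where "Aint = (\<integral>\<^sup>+ u. indicator {0<..1} u * ennreal ((r u)^4 / u^2) \<partial>lborel)"

lemma Q_val: "(\<integral>\<^sup>+ x. indicator {0<..1} x * ennreal (x^3) \<partial>lborel) = ennreal (1/4)"
proof -
  have "(\<integral>\<^sup>+ x. indicator {0<..1} x * ennreal (x^3) \<partial>lborel) = (\<integral>\<^sup>+ x. ennreal (1 * x^3) * indicator {0<..1} x \<partial>lborel)"
    by (simp add: mult.commute)
  also have "\<dots> = ennreal (1 * (1^4 - 0^4) / 4)"
    by (rule nn_interval[OF _ _ _ hi_cube]) auto
  finally show ?thesis by simp
qed

lemma split_int:
  fixes f h :: "real \<Rightarrow> real"
  assumes [measurable]: "f \<in> borel_measurable borel" "h \<in> borel_measurable borel"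
    and "\<And>x. x \<in> {0<..1} \<Longrightarrow> 0 \<le> f x" "\<And>x. x \<in> {0<..1} \<Longrightarrow> 0 \<le> h x"
  shows "(\<integral>\<^sup>+ x. indicator {0<..1} x * ennreal (f x + h x) \<partial>lborel)
     = (\<integral>\<^sup>+ x. indicator {0<..1} x * ennreal (f x) \<partial>lborel) + (\<integral>\<^sup>+ x. indicator {0<..1} x * ennreal (h x) \<partial>lborel)"
proof -
  have "(\<integral>\<^sup>+ x. indicator {0<..1} x * ennreal (f x + h x) \<partial>lborel)
      = (\<integral>\<^sup>+ x. indicator {0<..1} x * ennreal (f x) + indicator {0<..1} x * ennreal (h x) \<partial>lborel)"
    by (rule nn_integral_cong) (use assms(3,4) in \<open>auto simp: indicator_def ennreal_plus\<close>)
  also have "\<dots> = (\<integral>\<^sup>+ x. indicator {0<..1} x * ennreal (f x) \<partial>lborel) + (\<integral>\<^sup>+ x. indicator {0<..1} x * ennreal (h x) \<partial>lborel)"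
    by (rule nn_integral_add) measurable
  finally show ?thesis .
qed

lemma cmult_int:
  fixes f :: "real \<Rightarrow> real"
  assumes [measurable]: "f \<in> borel_measurable borel" and c: "0 \<le> c" and "\<And>x. x \<in> {0<..1} \<Longrightarrow> 0 \<le> f x"
  shows "(\<integral>\<^sup>+ x. indicator {0<..1} x * ennreal (c * f x) \<partial>lborel) = ennreal c * (\<integral>\<^sup>+ x. indicator {0<..1} x * ennreal (f x) \<partial>lborel)"
proof -
  have "(\<integral>\<^sup>+ x. indicator {0<..1} x * ennreal (c * f x) \<partial>lborel) = (\<integral>\<^sup>+ x. ennreal c * (indicator {0<..1} x * ennreal (f x)) \<partial>lborel)"
    by (rule nn_integral_cong) (use assms(3) c in \<open>auto simp: indicator_def ennreal_mult\<close>)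
  also have "\<dots> = ennreal c * (\<integral>\<^sup>+ x. indicator {0<..1} x * ennreal (f x) \<partial>lborel)"
    by (rule nn_integral_cmult) measurable
  finally show ?thesis .
qed

lemma inv_psi_ge1: "x \<in> {0<..1} \<Longrightarrow> 1 \<le> 1 / psi x"
  using psi_pos[of x] psi_le1[of x] by simp

lemma I1_eq: "I1 = ennreal (1/4) + ennreal (1/4) * Aint"
proof -
  have "I1 = (\<integral>\<^sup>+ x. indicator {0<..1} x * ennreal (x^3 + x^3 * (1 / psi x - 1 / 1)) \<partial>lborel)"
    unfolding I1_def
  proof (rule nn_integral_cong)
    fix x :: real
    show "indicator {0<..1} x * ennreal (x * d x) = indicator {0<..1} x * ennreal (x^3 + x^3 * (1 / psi x - 1 / 1))"
    proof (cases "x \<in> {0<..1}")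
      case True
      have "x^3 + x^3 * (1 / psi x - 1 / 1) = x * d x"
        using d_pos[OF True] True by (simp add: psi_def field_simps power2_eq_square power3_eq_cube)
      thus ?thesis by simp
    qed simp
  qed
  also have "\<dots> = ennreal (1/4) + (\<integral>\<^sup>+ x. indicator {0<..1} x * ennreal (x^3 * (1 / psi x - 1 / 1)) \<partial>lborel)"
    by (subst split_int) (use inv_psi_ge1 Q_val in auto)
  also have "(\<integral>\<^sup>+ x. indicator {0<..1} x * ennreal (x^3 * (1 / psi x - 1 / 1)) \<partial>lborel)
      = (\<integral>\<^sup>+ u. indicator {0<..1} u * ennreal (1 / u^2 * (r u)^4 / 4) \<partial>lborel)"
  proof (rule layer[where k="\<lambda>u. 1 / u^2" and KK="\<lambda>a. 1 / a - 1 / 1"])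
    fix a :: real assume "a \<in> {0<..1}"
    thus "((\<lambda>u. 1 / u^2) has_integral (1 / a - 1 / 1)) {a..1}" by (intro hi_inv2) auto
  next
    show "(\<lambda>u::real. 1 / u^2) \<in> borel_measurable borel" by measurable
  qed simp
  also have "\<dots> = (\<integral>\<^sup>+ u. indicator {0<..1} u * ennreal ((1/4) * ((r u)^4 / u^2)) \<partial>lborel)"
    by (simp add: field_simps)
  also have "\<dots> = ennreal (1/4) * Aint" unfolding Aint_def by (rule cmult_int) auto
  finally show ?thesis .
qed

lemma I2_eq: "I2 = ennreal (1/4) + ennreal (1/2) * Bint"
proof -
  have "I2 = (\<integral>\<^sup>+ x. indicator {0<..1} x * ennreal (x^3 + x^3 * (2 / (2 * (psi x)^2) - 2 / (2 * 1^2))) \<partial>lborel)"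
    unfolding I2_def
  proof (rule nn_integral_cong)
    fix x :: real
    show "indicator {0<..1} x * ennreal ((d x)^2 / x) = indicator {0<..1} x * ennreal (x^3 + x^3 * (2 / (2 * (psi x)^2) - 2 / (2 * 1^2)))"
    proof (cases "x \<in> {0<..1}")
      case True
      have "x^3 + x^3 * (2 / (2 * (psi x)^2) - 2 / (2 * 1^2)) = (d x)^2 / x"
        using d_pos[OF True] True by (simp add: psi_def field_simps power2_eq_square power3_eq_cube)
      thus ?thesis by simp
    qed simp
  qed
  also have "\<dots> = ennreal (1/4) + (\<integral>\<^sup>+ x. indicator {0<..1} x * ennreal (x^3 * (2 / (2 * (psi x)^2) - 2 / (2 * 1^2))) \<partial>lborel)"
  proof (subst split_int)
    show "\<And>x. x \<in> {0<..1} \<Longrightarrow> 0 \<le> x ^ 3 * (2 / (2 * (psi x)\<^sup>2) - 2 / (2 * 1\<^sup>2))"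
    proof -
      fix x :: real assume x: "x \<in> {0<..1}"
      have "1 \<le> 1 / (psi x)^2" using psi_pos[OF x] psi_le1[OF x] by (simp add: power_le_one)
      thus "0 \<le> x ^ 3 * (2 / (2 * (psi x)\<^sup>2) - 2 / (2 * 1\<^sup>2))" using x by simp
    qed
  qed (use Q_val in auto)
  also have "(\<integral>\<^sup>+ x. indicator {0<..1} x * ennreal (x^3 * (2 / (2 * (psi x)^2) - 2 / (2 * 1^2))) \<partial>lborel)
      = (\<integral>\<^sup>+ u. indicator {0<..1} u * ennreal (2 / u^3 * (r u)^4 / 4) \<partial>lborel)"
  proof (rule layer[where k="\<lambda>u. 2 / u^3" and KK="\<lambda>a. 2 / (2 * a^2) - 2 / (2 * 1^2)"])
    fix a :: real assume "a \<in> {0<..1}"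
    thus "((\<lambda>u. 2 / u^3) has_integral (2 / (2 * a^2) - 2 / (2 * 1^2))) {a..1}" by (intro hi_inv3) auto
  next
    show "(\<lambda>u::real. 2 / u^3) \<in> borel_measurable borel" by measurable
  qed simp
  also have "\<dots> = (\<integral>\<^sup>+ u. indicator {0<..1} u * ennreal ((1/2) * ((r u)^4 / u^3)) \<partial>lborel)"
    by (simp add: field_simps)
  also have "\<dots> = ennreal (1/2) * Bint" unfolding Bint_def by (rule cmult_int) auto
  finally show ?thesis .
qed

end

context lsl begin

lemma I2_fin: "I2 \<le> 1"
  unfolding I2_def
proof (rule fin_le1)
  fix x :: real assume x: "x \<in> {0<..1}"
  have "0 \<le> d x" "d x \<le> x" using d_nn[of x] d_le[of x] x by auto
  hence "(d x)^2 \<le> x^2" by (intro power_mono) auto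
  hence "(d x)^2 / x \<le> x^2 / x" using x by (intro divide_right_mono) auto
  also have "\<dots> = x" using x by (simp add: power2_eq_square)
  finally have "(d x)^2 / x \<le> x" .
  thus "(d x)^2 / x \<le> 1" using x by (meson greaterThanAtMost_iff order_trans)
qed

lemma half_int: "(\<integral>\<^sup>+ x. indicator {0<..1} x * ennreal x \<partial>lborel) = ennreal (1/2)"
proof -
  have "(\<integral>\<^sup>+ x. indicator {0<..1} x * ennreal x \<partial>lborel) = (\<integral>\<^sup>+ x. ennreal (0 + 1 * x) * indicator {0<..1} x \<partial>lborel)"
    by (simp add: mult.commute)
  also have "\<dots> = ennreal (0 * (1 - 0) + 1 * (1^2 - 0^2) / 2)"
    by (rule nn_interval[OF _ _ _ hi_lin]) auto
  finally show ?thesis by simp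
qed

lemma LL: "Lint + Lint + I2 = ennreal (1/2)"
proof -
  have nn: "0 \<le> s * (1 - (g s)^2) / 2" if "s \<in> {0<..1}" for s
  proof -
    have "(g s)^2 \<le> 1" using g_nn[of s] g_le1[of s] that by (simp add: power_le_one)
    thus ?thesis using that by simp
  qed
  have e1: "Lint + Lint = (\<integral>\<^sup>+ s. indicator {0<..1} s * ennreal (s * (1 - (g s)^2) / 2 + s * (1 - (g s)^2) / 2) \<partial>lborel)"
    unfolding Lint_def by (subst split_int) (measurable, measurable, use nn in auto)
  have e2: "(\<integral>\<^sup>+ s. indicator {0<..1} s * ennreal (s * (1 - (g s)^2) / 2 + s * (1 - (g s)^2) / 2) \<partial>lborel) + I2 = (\<integral>\<^sup>+ s. indicator {0<..1} s * ennreal ((s * (1 - (g s)^2) / 2 + s * (1 - (g s)^2) / 2) + (d s)^2 / s) \<partial>lborel)"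
    unfolding I2_def by (subst split_int) (measurable, measurable, use nn d_nn in \<open>auto intro!: add_nonneg_nonneg\<close>)
  have e3: "(\<integral>\<^sup>+ s. indicator {0<..1} s * ennreal ((s * (1 - (g s)^2) / 2 + s * (1 - (g s)^2) / 2) + (d s)^2 / s) \<partial>lborel) = (\<integral>\<^sup>+ s. indicator {0<..1} s * ennreal s \<partial>lborel)"
  proof (rule nn_integral_cong)
    fix s :: real
    have "s \<noteq> 0 \<Longrightarrow> (s * (1 - (g s)^2) / 2 + s * (1 - (g s)^2) / 2) + (d s)^2 / s = s"
      by (simp add: g_def field_simps power2_eq_square)
    thus "indicator {0<..1} s * ennreal ((s * (1 - (g s)^2) / 2 + s * (1 - (g s)^2) / 2) + (d s)^2 / s) = indicator {0<..1} s * ennreal s"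
      by (cases "s \<in> {0<..1}") auto
  qed
  show ?thesis using e1 e2 e3 half_int by simp
qed

lemma X_I2: "Lint + Lint + Bint = I2"
proof -
  have fin: "I2 \<noteq> \<infinity>" using I2_fin by (auto simp: top_unique)
  have "I2 + (Lint + Lint + Bint) = (Lint + Lint + I2) + Bint" by (simp add: add_ac)
  also have "\<dots> = ennreal (1/2) + Bint" using LL by simp
  also have "\<dots> = I2 + I2"
  proof -
    have "I2 + I2 = (ennreal (1/4) + ennreal (1/4)) + (ennreal (1/2) + ennreal (1/2)) * Bint"
      unfolding I2_eq by (simp add: add_ac distrib_right)
    also have "ennreal (1/4) + ennreal (1/4) = ennreal (1/4 + 1/4)" by (rule ennreal_plus[symmetric]) auto
    also have "ennreal (1/2) + ennreal (1/2) = ennreal (1/2 + 1/2)" by (rule ennreal_plus[symmetric]) auto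
    finally show ?thesis by simp
  qed
  finally show ?thesis using fin ennreal_add_left_cancel by metis
qed

end

context lsl begin

lemma pw_ineq:
  assumes u: "u \<in> {0<..1}"
  defines "K \<equiv> r (2/3) / (2/3)"
  shows "2 * ((r u)^4 / u^3) + 3 * u^2 * K^4 \<le> 3 * ((r u)^4 / u^2) + 2 * u * K^4"
proof -
  define k where "k = r u / u"
  have up: "0 < u" using u by simp
  have k0: "0 \<le> k" using r_basic(3)[of u] up by (simp add: k_def)
  have K0: "0 \<le> K" using r_basic(3)[of "2/3"] by (simp add: K_def)
  have ru: "r u = u * k" using up by (simp add: k_def)
  have e1: "(r u)^4 / u^3 = u * k^4" using up by (simp add: ru field_simps power4_eq_xxxx power3_eq_cube)
  have e2: "(r u)^4 / u^2 = u^2 * k^4" using up by (simp add: ru field_simps power4_eq_xxxx power2_eq_square)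
  have key: "0 \<le> u * ((3 * u - 2) * (k^4 - K^4))"
  proof (cases "u \<le> 2/3")
    case True
    have "k \<le> K" using kk_mono[of u "2/3"] True up by (simp add: k_def K_def)
    hence "k^4 \<le> K^4" using k0 by (intro power_mono) auto
    hence "0 \<le> (3 * u - 2) * (k^4 - K^4)" using True by (intro mult_nonpos_nonpos) auto
    thus ?thesis using up by simp
  next
    case False
    have "K \<le> k" using kk_mono[of "2/3" u] False u by (simp add: k_def K_def)
    hence "K^4 \<le> k^4" using K0 by (intro power_mono) auto
    hence "0 \<le> (3 * u - 2) * (k^4 - K^4)" using False by (intro mult_nonneg_nonneg) auto
    thus ?thesis using up by simp
  qed
  show ?thesis unfolding e1 e2 using key by (simp add: algebra_simps power2_eq_square)
qed

lemma poly_int2: "(\<integral>\<^sup>+ x. indicator {0<..1} x * ennreal (3 * x^2 * c) \<partial>lborel) = ennreal c" if "0 \<le> c" for c :: real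
proof -
  have "(\<integral>\<^sup>+ x. indicator {0<..1} x * ennreal (3 * x^2 * c) \<partial>lborel) = (\<integral>\<^sup>+ x. ennreal (3 * x^2 * c) * indicator {0<..1} x \<partial>lborel)"
    by (simp add: mult.commute)
  also have "\<dots> = ennreal c"
    by (rule nn_interval[where a=0 and b=1, OF _ _ _ ftc_eq[where F="\<lambda>x. x^3 * c"]]) (auto intro!: derivative_eq_intros simp: that)
  finally show ?thesis .
qed

lemma poly_int1: "(\<integral>\<^sup>+ x. indicator {0<..1} x * ennreal (2 * x * c) \<partial>lborel) = ennreal c" if "0 \<le> c" for c :: real
proof -
  have "(\<integral>\<^sup>+ x. indicator {0<..1} x * ennreal (2 * x * c) \<partial>lborel) = (\<integral>\<^sup>+ x. ennreal (2 * x * c) * indicator {0<..1} x \<partial>lborel)"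
    by (simp add: mult.commute)
  also have "\<dots> = ennreal c"
    by (rule nn_interval[where a=0 and b=1, OF _ _ _ ftc_eq[where F="\<lambda>x. x^2 * c"]]) (auto intro!: derivative_eq_intros simp: that)
  finally show ?thesis .
qed

lemma ineq: "ennreal 2 * Bint \<le> ennreal 3 * Aint"
proof -
  define K where "K = r (2/3) / (2/3)"
  have K0: "0 \<le> K^4" by simp
  have nnB: "\<And>u. u \<in> {0<..1} \<Longrightarrow> 0 \<le> (r u)^4 / u^3" using r_basic(3) by simp
  have nnA: "\<And>u. u \<in> {0<..1} \<Longrightarrow> 0 \<le> (r u)^4 / u^2" using r_basic(3) by simp
  have "ennreal 2 * Bint + ennreal (K^4) = (\<integral>\<^sup>+ u. indicator {0<..1} u * ennreal (2 * ((r u)^4 / u^3)) \<partial>lborel)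
      + (\<integral>\<^sup>+ u. indicator {0<..1} u * ennreal (3 * u^2 * K^4) \<partial>lborel)"
    unfolding Bint_def by (subst cmult_int) (use nnB poly_int2[OF K0] in auto)
  also have "\<dots> = (\<integral>\<^sup>+ u. indicator {0<..1} u * ennreal (2 * ((r u)^4 / u^3) + 3 * u^2 * K^4) \<partial>lborel)"
    by (subst split_int) (use nnB in auto)
  also have "\<dots> \<le> (\<integral>\<^sup>+ u. indicator {0<..1} u * ennreal (3 * ((r u)^4 / u^2) + 2 * u * K^4) \<partial>lborel)"
  proof (intro nn_integral_mono)
    fix u :: real
    show "indicator {0<..1} u * ennreal (2 * ((r u)^4 / u^3) + 3 * u^2 * K^4) \<le> indicator {0<..1} u * ennreal (3 * ((r u)^4 / u^2) + 2 * u * K^4)"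
    proof (cases "u \<in> {0<..1}")
      case True
      have "ennreal (2 * ((r u)^4 / u^3) + 3 * u^2 * K^4) \<le> ennreal (3 * ((r u)^4 / u^2) + 2 * u * K^4)"
        using pw_ineq[OF True] unfolding K_def by (intro ennreal_leI)
      thus ?thesis using True by simp
    qed simp
  qed
  also have "\<dots> = (\<integral>\<^sup>+ u. indicator {0<..1} u * ennreal (3 * ((r u)^4 / u^2)) \<partial>lborel)
      + (\<integral>\<^sup>+ u. indicator {0<..1} u * ennreal (2 * u * K^4) \<partial>lborel)"
    by (subst split_int) (use nnA in auto)
  also have "\<dots> = ennreal 3 * Aint + ennreal (K^4)"
    unfolding Aint_def by (subst cmult_int) (use nnA poly_int1[OF K0] in auto)
  finally have "ennreal (K^4) + ennreal 2 * Bint \<le> ennreal (K^4) + ennreal 3 * Aint" by (simp add: add_ac)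
  thus ?thesis using ennreal_add_left_cancel_le by simp
qed

end

context lsl begin

lemma Sd_nn: "x \<in> {0..1} \<Longrightarrow> y \<in> {0..1} \<Longrightarrow> 0 \<le> S_diag d x y"
  using d_nn[of x] d_nn[of y] by (auto simp: S_diag_def)

lemma half_g: "(\<integral>\<^sup>+ y. ennreal (0 + g x * y) * indicator S y \<partial>lborel) = ennreal (g x * x^2 / 2)"
  if "x \<in> {0<..1}" "{0<..<x} \<subseteq> S" "S \<subseteq> {0..x}"
proof -
  have "(\<integral>\<^sup>+ y. ennreal (0 + g x * y) * indicator S y \<partial>lborel) = ennreal (0 * (x - 0) + g x * (x^2 - 0^2) / 2)"
    by (rule nn_interval[OF _ _ _ hi_lin]) (use that g_nn[of x] in auto)
  thus ?thesis by simp
qed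

lemma Y_eq: "(\<integral>\<^sup>+ p. indicator ({0..1} \<times> {0..1}) p * ennreal (S_diag d (fst p) (snd p)) \<partial>lborel) = I1"
proof -
  define P1 where "P1 = (\<lambda>p::real\<times>real. if 0 < fst p \<and> fst p \<le> 1 \<and> 0 \<le> snd p \<and> snd p \<le> fst p then ennreal (snd p * g (fst p)) else 0)"
  define P2 where "P2 = (\<lambda>p::real\<times>real. if 0 < snd p \<and> snd p \<le> 1 \<and> 0 \<le> fst p \<and> fst p < snd p then ennreal (fst p * g (snd p)) else 0)"
  have m1: "P1 \<in> borel_measurable (borel \<Otimes>\<^sub>M borel)" unfolding P1_def by measurable
  have m2: "P2 \<in> borel_measurable (borel \<Otimes>\<^sub>M borel)" unfolding P2_def by measurable
  have "(\<integral>\<^sup>+ p. indicator ({0..1} \<times> {0..1}) p * ennreal (S_diag d (fst p) (snd p)) \<partial>lborel) = (\<integral>\<^sup>+ p. P1 p + P2 p \<partial>lborel)"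
  proof (rule nn_integral_cong)
    fix p :: "real \<times> real"
    obtain x y where p: "p = (x, y)" by (cases p)
    show "indicator ({0..1} \<times> {0..1}) p * ennreal (S_diag d (fst p) (snd p)) = P1 p + P2 p"
    proof (cases "y \<le> x")
      case True
      show ?thesis
      proof (cases "x \<in> {0<..1} \<and> 0 \<le> y")
        case True2: True
        thus ?thesis using True p by (simp add: P1_def P2_def S_diag_def g_def indicator_def mult.commute)
      next
        case False
        hence "x \<le> 0 \<or> x > 1 \<or> y < 0" by auto
        moreover have "0 \<le> y \<Longrightarrow> x \<le> 0 \<Longrightarrow> S_diag d x y = 0"
        proof -
          assume "0 \<le> y" "x \<le> 0"
          hence "x = 0" "y = 0" using True by auto
          thus ?thesis by (simp add: S_diag_def)
        qed
        ultimately show ?thesis using True p by (auto simp: P1_def P2_def indicator_def)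
      qed
    next
      case False
      thus ?thesis using p by (auto simp: P1_def P2_def S_diag_def g_def indicator_def mult.commute)
    qed
  qed
  also have "\<dots> = integral\<^sup>N lborel P1 + integral\<^sup>N lborel P2"
    by (rule nn_integral_add) (use m1 m2 in \<open>simp_all add: borel_prod\<close>)
  also have "integral\<^sup>N lborel P1 = (\<integral>\<^sup>+ x. indicator {0<..1} x * ennreal (g x * x^2 / 2) \<partial>lborel)"
  proof -
    have "integral\<^sup>N lborel P1 = (\<integral>\<^sup>+ x. \<integral>\<^sup>+ y. P1 (x, y) \<partial>lborel \<partial>lborel)" by (rule nn_pair_fst[OF m1])
    also have "\<dots> = (\<integral>\<^sup>+ x. indicator {0<..1} x * ennreal (g x * x^2 / 2) \<partial>lborel)"
    proof (rule nn_integral_cong)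
      fix x :: real
      show "(\<integral>\<^sup>+ y. P1 (x, y) \<partial>lborel) = indicator {0<..1} x * ennreal (g x * x^2 / 2)"
      proof (cases "x \<in> {0<..1}")
        case True
        have "(\<integral>\<^sup>+ y. P1 (x, y) \<partial>lborel) = (\<integral>\<^sup>+ y. ennreal (0 + g x * y) * indicator {0..x} y \<partial>lborel)"
          using True by (intro nn_integral_cong) (simp add: P1_def indicator_def mult.commute)
        moreover have "{0<..<x} \<subseteq> {0..x}" "{0..x} \<subseteq> {0..x}" by auto
        ultimately show ?thesis using half_g[OF True, of "{0..x}"] True by simp
      next
        case False
        hence "\<And>y. P1 (x, y) = 0" by (auto simp: P1_def)
        thus ?thesis using False by simp
      qed
    qed
    finally show ?thesis .
  qed
  also have "integral\<^sup>N lborel P2 = (\<integral>\<^sup>+ x. indicator {0<..1} x * ennreal (g x * x^2 / 2) \<partial>lborel)"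
  proof -
    have "integral\<^sup>N lborel P2 = (\<integral>\<^sup>+ y. \<integral>\<^sup>+ x. P2 (x, y) \<partial>lborel \<partial>lborel)" by (rule nn_pair_snd[OF m2])
    also have "\<dots> = (\<integral>\<^sup>+ x. indicator {0<..1} x * ennreal (g x * x^2 / 2) \<partial>lborel)"
    proof (rule nn_integral_cong)
      fix y :: real
      show "(\<integral>\<^sup>+ x. P2 (x, y) \<partial>lborel) = indicator {0<..1} y * ennreal (g y * y^2 / 2)"
      proof (cases "y \<in> {0<..1}")
        case True
        have "(\<integral>\<^sup>+ x. P2 (x, y) \<partial>lborel) = (\<integral>\<^sup>+ x. ennreal (0 + g y * x) * indicator {0..<y} x \<partial>lborel)"
          using True by (intro nn_integral_cong) (simp add: P2_def indicator_def mult.commute)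
        moreover have "{0<..<y} \<subseteq> {0..<y}" "{0..<y} \<subseteq> {0..y}" by auto
        ultimately show ?thesis using half_g[OF True, of "{0..<y}"] True by simp
      next
        case False
        hence "\<And>x. P2 (x, y) = 0" by (auto simp: P2_def)
        thus ?thesis using False by simp
      qed
    qed
    finally show ?thesis .
  qed
  also have "(\<integral>\<^sup>+ x. indicator {0<..1} x * ennreal (g x * x^2 / 2) \<partial>lborel) + (\<integral>\<^sup>+ x. indicator {0<..1} x * ennreal (g x * x^2 / 2) \<partial>lborel)
     = (\<integral>\<^sup>+ x. indicator {0<..1} x * ennreal (g x * x^2 / 2 + g x * x^2 / 2) \<partial>lborel)"
    by (subst split_int) (use g_nn in \<open>auto\<close>)
  also have "\<dots> = I1" unfolding I1_def
    by (rule nn_integral_cong) (auto simp: g_def indicator_def power2_eq_square mult.commute)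
  finally show ?thesis .
qed

end

context lsl begin

lemma K_sets: "{0..1::real} \<times> {0..1::real} \<in> sets borel" by (rule rect_closed)

lemma S_eq_on_K: "p \<in> {0..1} \<times> {0..1} \<Longrightarrow> S_diag \<delta> (fst p) (snd p) = S_diag d (fst p) (snd p)"
  by (auto simp: S_diag_def d_eq)

lemma rho_val: "spearman_rho (S_diag \<delta>) = 12 * enn2real I1 - 3"
proof -
  let ?K = "{0..1::real} \<times> {0..1::real}"
  have [measurable]: "(\<lambda>p. S_diag d (fst p) (snd p)) \<in> borel_measurable borel" by (rule Sd_meas)
  have [measurable]: "?K \<in> sets borel" by (rule K_sets)
  have "(LINT p:?K|lborel. S_diag \<delta> (fst p) (snd p)) = (LINT p:?K|lborel. S_diag d (fst p) (snd p))"
    by (rule set_lebesgue_integral_cong) (use K_sets S_eq_on_K in auto)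
  also have "\<dots> = integral\<^sup>L lborel (\<lambda>p. indicator ?K p * S_diag d (fst p) (snd p))"
    by (simp add: set_lebesgue_integral_def)
  also have "\<dots> = enn2real (\<integral>\<^sup>+ p. ennreal (indicator ?K p * S_diag d (fst p) (snd p)) \<partial>lborel)"
  proof (rule integral_eq_nn_integral)
    show "(\<lambda>p. indicator ?K p * S_diag d (fst p) (snd p)) \<in> borel_measurable lborel" by simp measurable
    show "AE p in lborel. 0 \<le> indicator ?K p * S_diag d (fst p) (snd p)"
      by (rule AE_I2) (auto simp: indicator_def intro: Sd_nn)
  qed
  also have "(\<integral>\<^sup>+ p. ennreal (indicator ?K p * S_diag d (fst p) (snd p)) \<partial>lborel)
      = (\<integral>\<^sup>+ p. indicator ?K p * ennreal (S_diag d (fst p) (snd p)) \<partial>lborel)"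
    by (rule nn_integral_cong) (simp add: indicator_def)
  also have "\<dots> = I1" by (rule Y_eq)
  finally show ?thesis unfolding spearman_rho_def by simp
qed

lemma AE_K: "AE p in mu. p \<in> {0..1} \<times> {0..1}"
proof (rule AE_I')
  show "- ({0..1} \<times> {0..1}) \<in> null_sets mu"
    using compl_null sets_mu by (simp add: null_sets_def) (intro borel_open open_Compl closed_Times closed_atLeastAtMost)
qed (auto simp: sets_mu)

lemma tau_val:
  assumes m: "(\<lambda>p. S_diag \<delta> (fst p) (snd p)) \<in> borel_measurable borel"
  shows "kendall_tau (S_diag \<delta>) = 4 * enn2real I2 - 1"
proof -
  have [measurable]: "(\<lambda>p. S_diag d (fst p) (snd p)) \<in> borel_measurable borel" by (rule Sd_meas)
  have ms: "measurable mu (borel :: real measure) = measurable borel (borel :: real measure)" by (rule measurable_cong_sets) (simp_all add: sets_mu)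
  have "integral\<^sup>L mu (\<lambda>p. S_diag \<delta> (fst p) (snd p)) = integral\<^sup>L mu (\<lambda>p. S_diag d (fst p) (snd p))"
  proof (rule integral_cong_AE)
    show "(\<lambda>p. S_diag \<delta> (fst p) (snd p)) \<in> borel_measurable mu" using m ms by simp
    show "(\<lambda>p. S_diag d (fst p) (snd p)) \<in> borel_measurable mu" using ms by simp
    show "AE p in mu. S_diag \<delta> (fst p) (snd p) = S_diag d (fst p) (snd p)"
      using AE_K by eventually_elim (rule S_eq_on_K)
  qed
  also have "\<dots> = enn2real (\<integral>\<^sup>+ p. ennreal (S_diag d (fst p) (snd p)) \<partial>mu)"
  proof (rule integral_eq_nn_integral)
    show "(\<lambda>p. S_diag d (fst p) (snd p)) \<in> borel_measurable mu" using ms by simp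
    show "AE p in mu. 0 \<le> S_diag d (fst p) (snd p)"
      using AE_K by eventually_elim (auto intro: Sd_nn)
  qed
  also have "(\<integral>\<^sup>+ p. ennreal (S_diag d (fst p) (snd p)) \<partial>mu) = I2" using X_eq X_I2 by simp
  finally show ?thesis unfolding kendall_tau_def copula_mu by simp
qed

lemma tau_nonmeas:
  assumes m: "(\<lambda>p. S_diag \<delta> (fst p) (snd p)) \<notin> borel_measurable borel"
  shows "kendall_tau (S_diag \<delta>) = - 1"
proof -
  have ms: "measurable mu (borel :: real measure) = measurable borel (borel :: real measure)" by (rule measurable_cong_sets) (simp_all add: sets_mu)
  have "\<not> integrable mu (\<lambda>p. S_diag \<delta> (fst p) (snd p))"
    using m ms borel_measurable_integrable by metis
  hence "integral\<^sup>L mu (\<lambda>p. S_diag \<delta> (fst p) (snd p)) = 0" by (rule not_integrable_integral_eq)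
  thus ?thesis unfolding kendall_tau_def copula_mu by simp
qed

lemma A_fin: "Aint \<le> 1"
  unfolding Aint_def
proof (rule fin_le1)
  fix u :: real assume u: "u \<in> {0<..1}"
  have "(r u)^4 \<le> u^4" using r_le_u[OF u] r_basic(3)[of u] by (intro power_mono) auto
  hence "(r u)^4 / u^2 \<le> u^4 / u^2" using u by (intro divide_right_mono) auto
  also have "\<dots> = u^2" using u by (simp add: power2_eq_square power4_eq_xxxx)
  also have "\<dots> \<le> 1" using u by (simp add: power_le_one)
  finally show "(r u)^4 / u^2 \<le> 1" .
qed

lemma B_fin: "Bint \<le> 1"
  unfolding Bint_def
proof (rule fin_le1)
  fix u :: real assume u: "u \<in> {0<..1}"
  have "(r u)^4 \<le> u^4" using r_le_u[OF u] r_basic(3)[of u] by (intro power_mono) auto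
  hence "(r u)^4 / u^3 \<le> u^4 / u^3" using u by (intro divide_right_mono) auto
  also have "\<dots> = u" using u by (simp add: power3_eq_cube power4_eq_xxxx)
  also have "\<dots> \<le> 1" using u by simp
  finally show "(r u)^4 / u^3 \<le> 1" .
qed

lemma real_forms:
  obtains a b where "0 \<le> a" "0 \<le> b" "2 * b \<le> 3 * a" "enn2real I1 = 1/4 + a/4" "enn2real I2 = 1/4 + b/2"
proof -
  define a where "a = enn2real Aint"
  define b where "b = enn2real Bint"
  have nA: "Aint \<noteq> \<infinity>"
  proof
    assume "Aint = \<infinity>" with A_fin show False by (simp add: top_unique)
  qed
  have nB: "Bint \<noteq> \<infinity>"
  proof
    assume "Bint = \<infinity>" with B_fin show False by (simp add: top_unique)
  qed
  have Ae: "Aint = ennreal a" unfolding a_def using nA by (simp add: ennreal_enn2real_if)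
  have Be: "Bint = ennreal b" unfolding b_def using nB by (simp add: ennreal_enn2real_if)
  have a0: "0 \<le> a" "0 \<le> b" unfolding a_def b_def by auto
  have e2: "ennreal 2 * Bint = ennreal (2 * b)" unfolding Be using ennreal_mult[of 2 b] a0 by simp
  have e3: "ennreal 3 * Aint = ennreal (3 * a)" unfolding Ae using ennreal_mult[of 3 a] a0 by simp
  have "ennreal (2 * b) \<le> ennreal (3 * a)" using ineq unfolding e2 e3 .
  hence ab: "2 * b \<le> 3 * a" using ennreal_le_iff[of "3 * a" "2 * b"] a0 by simp
  have "I1 = ennreal (1/4 + a/4)" unfolding I1_eq Ae
    using ennreal_mult[of "1/4" a] ennreal_plus[of "1/4" "a/4"] a0 by simp
  hence i1: "enn2real I1 = 1/4 + a/4" using a0 by simp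
  have "I2 = ennreal (1/4 + b/2)" unfolding I2_eq Be
    using ennreal_mult[of "1/2" b] ennreal_plus[of "1/4" "b/2"] a0 by simp
  hence i2: "enn2real I2 = 1/4 + b/2" using a0 by simp
  show ?thesis using that a0 ab i1 i2 by blast
qed

lemma main_ineq: "kendall_tau (S_diag \<delta>) \<le> spearman_rho (S_diag \<delta>)"
proof -
  obtain a b where ab: "0 \<le> a" "0 \<le> b" "2 * b \<le> 3 * a" "enn2real I1 = 1/4 + a/4" "enn2real I2 = 1/4 + b/2"
    by (rule real_forms)
  show ?thesis
  proof (cases "(\<lambda>p. S_diag \<delta> (fst p) (snd p)) \<in> borel_measurable borel")
    case True
    thus ?thesis using tau_val[OF True] rho_val ab by simp
  next
    case False
    thus ?thesis using tau_nonmeas[OF False] rho_val ab by simp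
  qed
qed

end

definition dfam :: "real \<Rightarrow> real \<Rightarrow> real" where "dfam b x = (if x \<le> b then b * x else x^2)"

lemma dfam_lip:
  assumes b: "b \<in> {0..1}" and u: "u \<in> {0..1}" and v: "v \<in> {0..1}" and uv: "u \<le> v"
  shows "\<bar>dfam b u - dfam b v\<bar> \<le> 2 * \<bar>u - v\<bar>"
proof (cases "v \<le> b")
  case True
  hence e: "dfam b u = b * u" "dfam b v = b * v" using uv by (auto simp: dfam_def)
  have le: "b * u \<le> b * v" using b uv by (intro mult_left_mono) auto
  have "\<bar>dfam b u - dfam b v\<bar> = b * v - b * u" using e le by simp
  also have "\<dots> = b * (v - u)" by (simp add: algebra_simps)
  also have "\<dots> \<le> 2 * (v - u)" using b uv by (intro mult_right_mono) auto
  also have "\<dots> = 2 * \<bar>u - v\<bar>" using uv by simp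
  finally show ?thesis .
next
  case False
  show ?thesis
  proof (cases "u \<le> b")
    case True
    hence e: "dfam b u = b * u" "dfam b v = v^2" using False by (auto simp: dfam_def)
    have "b * u \<le> b * b" using True b by (intro mult_left_mono) auto
    also have "b * b \<le> v * v" using False b by (intro mult_mono) auto
    finally have le: "b * u \<le> v^2" by (simp add: power2_eq_square)
    have "v^2 - b * u = (v - b) * (v + b) + b * (b - u)" by (simp add: algebra_simps power2_eq_square)
    also have "(v - b) * (v + b) \<le> (v - b) * 2" using False b v by (intro mult_left_mono) auto
    also have "b * (b - u) \<le> 1 * (b - u)" using True b by (intro mult_right_mono) auto
    finally have "v^2 - b * u \<le> (v - b) * 2 + 1 * (b - u)" by simp
    moreover have "(v - b) * 2 + 1 * (b - u) \<le> 2 * (v - u)" using True by (simp add: algebra_simps)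
    ultimately have "v^2 - b * u \<le> 2 * (v - u)" by (rule order_trans)
    thus ?thesis using e le uv by simp
  next
    case False2: False
    hence e: "dfam b u = u^2" "dfam b v = v^2" using False by (auto simp: dfam_def)
    have "v^2 - u^2 = (v - u) * (v + u)" by (simp add: algebra_simps power2_eq_square)
    also have "\<dots> \<le> (v - u) * 2" using uv u v by (intro mult_left_mono) auto
    finally have "v^2 - u^2 \<le> 2 * (v - u)" by simp
    moreover have "u^2 \<le> v^2" using uv u by (intro power_mono) auto
    ultimately show ?thesis using e uv by simp
  qed
qed

lemma dfam_mono:
  assumes b: "b \<in> {0..1}" and u: "u \<in> {0..1}" and uv: "u \<le> v"
  shows "dfam b u \<le> dfam b v"
proof -
  have "b * u \<le> b * v" using b uv by (intro mult_left_mono) auto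
  moreover have "u \<le> b \<Longrightarrow> b < v \<Longrightarrow> b * u \<le> v^2"
  proof -
    assume "u \<le> b" "b < v"
    have "b * u \<le> b * b" using \<open>u \<le> b\<close> b by (intro mult_left_mono) auto
    also have "b * b \<le> v * v" using \<open>b < v\<close> b by (intro mult_mono) auto
    finally show ?thesis by (simp add: power2_eq_square)
  qed
  moreover have "b < u \<Longrightarrow> u^2 \<le> v^2" using uv u by (intro power_mono) auto
  ultimately show ?thesis using uv by (auto simp: dfam_def)
qed

lemma dfam_LSL:
  assumes b: "b \<in> {0..1}"
  shows "dfam b \<in> diagonals_LSL"
proof -
  have r: "\<And>u. u \<in> {0..1} \<Longrightarrow> dfam b u \<in> {0..1}"
  proof -
    fix u :: real assume u: "u \<in> {0..1}"
    have "b * u \<le> 1 * 1" using b u by (intro mult_mono) auto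
    moreover have "u^2 \<le> 1" using u by (simp add: power_le_one)
    ultimately show "dfam b u \<in> {0..1}" using b u by (auto simp: dfam_def)
  qed
  have le: "\<And>u. u \<in> {0..1} \<Longrightarrow> dfam b u \<le> u"
  proof -
    fix u :: real assume u: "u \<in> {0..1}"
    have "b * u \<le> 1 * u" using b u by (intro mult_right_mono) auto
    moreover have "u * u \<le> u * 1" using u by (intro mult_left_mono) auto
    hence "u^2 \<le> u" by (simp add: power2_eq_square)
    ultimately show "dfam b u \<le> u" by (auto simp: dfam_def)
  qed
  have one: "dfam b 1 = 1" using b by (auto simp: dfam_def)
  have mono: "mono_on {0..1} (dfam b)"
    by (rule monotone_onI) (use dfam_mono b in auto)
  have lip: "\<forall>u\<in>{0..1}. \<forall>v\<in>{0..1}. \<bar>dfam b u - dfam b v\<bar> \<le> 2 * \<bar>u - v\<bar>"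
  proof (intro ballI)
    fix u v :: real assume u: "u \<in> {0..1}" and v: "v \<in> {0..1}"
    show "\<bar>dfam b u - dfam b v\<bar> \<le> 2 * \<bar>u - v\<bar>"
    proof (cases "u \<le> v")
      case True thus ?thesis using dfam_lip[OF b u v] by simp
    next
      case False thus ?thesis using dfam_lip[OF b v u] by (simp add: abs_minus_commute)
    qed
  qed
  have m1: "mono_on {0<..1} (\<lambda>x. dfam b x / x)"
  proof (rule monotone_onI)
    fix x y :: real assume x: "x \<in> {0<..1}" and y: "y \<in> {0<..1}" and xy: "x \<le> y"
    have ex: "dfam b x / x = (if x \<le> b then b else x)" using x by (auto simp: dfam_def power2_eq_square)
    have ey: "dfam b y / y = (if y \<le> b then b else y)" using y by (auto simp: dfam_def power2_eq_square)
    show "dfam b x / x \<le> dfam b y / y" unfolding ex ey using xy by auto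
  qed
  have m2: "antimono_on {0<..1} (\<lambda>x. dfam b x / x^2)"
  proof (rule monotone_onI)
    fix x y :: real assume x: "x \<in> {0<..1}" and y: "y \<in> {0<..1}" and xy: "x \<le> y"
    have ex: "dfam b x / x^2 = (if x \<le> b then b / x else 1)" using x by (auto simp: dfam_def power2_eq_square)
    have ey: "dfam b y / y^2 = (if y \<le> b then b / y else 1)" using y by (auto simp: dfam_def power2_eq_square)
    have "x \<le> b \<Longrightarrow> 1 \<le> b / x" using x by (simp add: le_divide_eq)
    moreover have "y \<le> b \<Longrightarrow> b / y \<le> b / x" using x y xy b by (intro divide_left_mono) auto
    ultimately show "dfam b y / y^2 \<le> dfam b x / x^2" unfolding ex ey using xy by auto
  qed
  show ?thesis unfolding diagonals_LSL_def diagonals_def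
    using r le one mono lip m1 m2 by auto
qed


lemma hi_sq: "a \<le> b \<Longrightarrow> ((\<lambda>x::real. c * x^2) has_integral (c * (b^3 - a^3) / 3)) {a..b}"
  by (rule ftc_eq[of a b "\<lambda>x. c * x^3 / 3"])
     (auto intro!: derivative_eq_intros simp: algebra_simps diff_divide_distrib power2_eq_square)

lemma split_piece:
  fixes fa fb :: "real \<Rightarrow> real" and b :: real
  assumes b: "b \<in> {0..1}"
    and e: "\<And>x. x \<in> {0<..1} \<Longrightarrow> F x = (if x \<le> b then fa x else fb x)"
    and na: "\<And>x. x \<in> {0..b} \<Longrightarrow> 0 \<le> fa x" and nb: "\<And>x. x \<in> {b..1} \<Longrightarrow> 0 \<le> fb x"
    and ha: "(fa has_integral Ia) {0..b}" and hb: "(fb has_integral Ib) {b..1}"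
    and ma[measurable]: "fa \<in> borel_measurable borel" and mb[measurable]: "fb \<in> borel_measurable borel"
  shows "(\<integral>\<^sup>+ x. indicator {0<..1} x * ennreal (F x) \<partial>lborel) = ennreal Ia + ennreal Ib"
proof -
  have "(\<integral>\<^sup>+ x. indicator {0<..1} x * ennreal (F x) \<partial>lborel)
      = (\<integral>\<^sup>+ x. ennreal (fa x) * indicator {0<..b} x + ennreal (fb x) * indicator {b<..1} x \<partial>lborel)"
    by (rule nn_integral_cong) (use e b in \<open>auto simp: indicator_def\<close>)
  also have "\<dots> = (\<integral>\<^sup>+ x. ennreal (fa x) * indicator {0<..b} x \<partial>lborel) + (\<integral>\<^sup>+ x. ennreal (fb x) * indicator {b<..1} x \<partial>lborel)"
    by (rule nn_integral_add) measurable
  also have "(\<integral>\<^sup>+ x. ennreal (fa x) * indicator {0<..b} x \<partial>lborel) = ennreal Ia"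
    by (rule nn_interval[OF _ _ _ ha na]) (use b in auto)
  also have "(\<integral>\<^sup>+ x. ennreal (fb x) * indicator {b<..1} x \<partial>lborel) = ennreal Ib"
    by (rule nn_interval[OF _ _ _ hb nb]) (use b in auto)
  finally show ?thesis .
qed

lemma dfam_vals:
  assumes b: "b \<in> {0..1}"
  shows "kendall_tau (S_diag (dfam b)) = b^4" "spearman_rho (S_diag (dfam b)) = b^4"
proof -
  interpret lsl "dfam b" by unfold_locales (rule dfam_LSL[OF b])
  have b0: "0 \<le> b" "b \<le> 1" using b by auto
  have "I1 = ennreal (b * (b^3 - 0^3) / 3) + ennreal (1 * (1^4 - b^4) / 4)"
    unfolding I1_def
  proof (rule split_piece[where fa="\<lambda>x. b * x^2" and fb="\<lambda>x. 1 * x^3", OF b])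
    fix x :: real assume x: "x \<in> {0<..1}"
    show "x * d x = (if x \<le> b then b * x^2 else 1 * x^3)"
      using x d_eq[of x] by (auto simp: dfam_def power2_eq_square power3_eq_cube)
  next
    show "((\<lambda>x. b * x^2) has_integral (b * (b^3 - 0^3) / 3)) {0..b}" by (rule hi_sq) (use b0 in auto)
    show "((\<lambda>x. 1 * x^3) has_integral (1 * (1^4 - b^4) / 4)) {b..1}" by (rule hi_cube) (use b0 in auto)
  qed (use b0 in auto)
  also have "\<dots> = ennreal (b * (b^3 - 0^3) / 3 + 1 * (1^4 - b^4) / 4)"
  proof (rule ennreal_plus[symmetric])
    show "0 \<le> 1 * (1^4 - b^4) / 4" using b0 by (simp add: power_le_one)
  qed (use b0 in simp)
  also have "b * (b^3 - 0^3) / 3 + 1 * (1^4 - b^4) / 4 = b^4 / 3 + (1 - b^4) / 4"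
    by (simp add: power3_eq_cube power4_eq_xxxx)
  finally have "I1 = ennreal (b^4 / 3 + (1 - b^4) / 4)" .
  moreover have "0 \<le> b^4 / 3 + (1 - b^4) / 4" using b0 by (simp add: power_le_one)
  ultimately have i1: "enn2real I1 = b^4 / 3 + (1 - b^4) / 4" by simp
  have "I2 = ennreal (b^2 * (b^2 - 0^2) / 2) + ennreal (1 * (1^4 - b^4) / 4)"
    unfolding I2_def
  proof (rule split_piece[where fa="\<lambda>x. b^2 * x" and fb="\<lambda>x. 1 * x^3", OF b])
    fix x :: real assume x: "x \<in> {0<..1}"
    show "(d x)^2 / x = (if x \<le> b then b^2 * x else 1 * x^3)"
      using x d_eq[of x] by (auto simp: dfam_def power2_eq_square power3_eq_cube power4_eq_xxxx)
  next
    show "((\<lambda>x. b^2 * x) has_integral (b^2 * (b^2 - 0^2) / 2)) {0..b}"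
      using hi_lin[of 0 b 0 "b^2"] b0 by simp
    show "((\<lambda>x. 1 * x^3) has_integral (1 * (1^4 - b^4) / 4)) {b..1}" by (rule hi_cube) (use b0 in auto)
  qed (use b0 in auto)
  also have "\<dots> = ennreal (b^2 * (b^2 - 0^2) / 2 + 1 * (1^4 - b^4) / 4)"
  proof (rule ennreal_plus[symmetric])
    show "0 \<le> 1 * (1^4 - b^4) / 4" using b0 by (simp add: power_le_one)
  qed (use b0 in simp)
  also have "b^2 * (b^2 - 0^2) / 2 + 1 * (1^4 - b^4) / 4 = b^4 / 2 + (1 - b^4) / 4"
    by (simp add: power2_eq_square power4_eq_xxxx)
  finally have "I2 = ennreal (b^4 / 2 + (1 - b^4) / 4)" .
  moreover have "0 \<le> b^4 / 2 + (1 - b^4) / 4" using b0 by (simp add: power_le_one)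
  ultimately have i2: "enn2real I2 = b^4 / 2 + (1 - b^4) / 4" by simp
  have m: "(\<lambda>p. S_diag (dfam b) (fst p) (snd p)) \<in> borel_measurable borel"
    by (rule meas_prod_borel) (unfold S_diag_def dfam_def, measurable)
  show "kendall_tau (S_diag (dfam b)) = b^4" using tau_val[OF m] i2 by (simp add: field_simps)
  show "spearman_rho (S_diag (dfam b)) = b^4" using rho_val i1 by (simp add: field_simps)
qed

theorem mainTheorem9:
  shows "(\<forall>\<delta>\<in>diagonals_LSL. kendall_tau (S_diag \<delta>) \<le> spearman_rho (S_diag \<delta>)) \<and>
         (\<forall>x\<in>{0..1::real}. \<exists>\<delta>\<in>diagonals_LSL.
             kendall_tau (S_diag \<delta>) = x \<and> spearman_rho (S_diag \<delta>) = x)"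
proof (intro conjI ballI)
  fix \<delta> assume "\<delta> \<in> diagonals_LSL"
  then interpret lsl \<delta> by unfold_locales
  show "kendall_tau (S_diag \<delta>) \<le> spearman_rho (S_diag \<delta>)" by (rule main_ineq)
next
  fix x :: real assume x: "x \<in> {0..1}"
  define b where "b = sqrt (sqrt x)"
  have b: "b \<in> {0..1}" using x by (auto simp: b_def)
  have b2: "b^2 = sqrt x" using x by (simp add: b_def)
  have "b^4 = (b^2)^2" by (simp add: power_mult[symmetric])
  hence b4: "b^4 = x" using b2 x by simp
  show "\<exists>\<delta>\<in>diagonals_LSL. kendall_tau (S_diag \<delta>) = x \<and> spearman_rho (S_diag \<delta>) = x"
    using dfam_LSL[OF b] dfam_vals[OF b] b4 by auto
qed


end
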